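(* Let $0<d<1/2$, let $q$ be a positive integer with $q<1/(1-2d)$, and let $K\ge0$ be an integer. For every $\theta\in\mathcal S^{(K)}_{q,d}$, $$\int_{\mathbb R^q}\frac{|\hat\theta(u_1+\cdots+u_q)|^2}{|u_1+\cdots+u_q|^{2K}|u_1\cdots u_q|^{2d}}\,du_1\cdots du_q<\infty,$$ so that $Z^{(K)}_{q,d}(\theta)$ is well defined. Moreover, under the filter assumptions below, if $K\in\{0,\dots,M\}$ then $h_{\infty,m,k}\in\mathcal S^{(K)}_{q,d}$ for all $m,k\in\mathbb Z$, so $Z^{(K)}_{q,d}(h_{\infty,m,k})$ is well defined.
   Context: For $\theta\in L^2(\mathbb R)$ (complex valued), $\hat\theta(\xi)=\int_{\mathbb R}\theta(t)e^{-\mathrm i t\xi}dt$ (extended to $L^2$). $\mathcal S^{(K)}_{q,d}=\{\theta:\int_{\mathbb R}|\hat\theta(\xi)|^2|\xi|^{q-1-2dq-2K}d\xi<\infty\}$. $\widehat W$ is a complex Gaussian random measure on $\mathbb R$ with $\mathbb E\widehat W(A)=0$, $\mathbb E[\widehat W(A)\overline{\widehat W(B)}]=|A\cap B|$, additive on disjoint sets, $\widehat W(A)=\overline{\widehat W(-A)}$, and $\int''$ denotes the multiple Wiener–Itô integral with respect to $\widehat W$ (hyperdiagonals excluded), defined for $L^2(\mathbb R^q)$ integrands. The generalized process is $$Z^{(K)}_{q,d}(\theta)=\int''_{\mathbb R^q}\frac{\overline{\hat\theta(u_1+\cdots+u_q)}}{(\mathrm i(u_1+\cdots+u_q))^K|u_1\cdots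 u_q|^d}\,d\widehat W(u_1)\cdots d\widehat W(u_q).$$ Filter assumptions: $M\ge K$ is an integer, $\alpha>1/2$, $C>0$, and $\hat h_\infty:\mathbb R\to\mathbb C$ satisfies $|\hat h_\infty(\lambda)|\le C|\lambda|^M(1+|\lambda|)^{-\alpha-M}$ for all $\lambda\in\mathbb R$; $h_\infty\in L^2(\mathbb R)$ is the function whose Fourier transform is $\hat h_\infty$. For $\bar\gamma_m>0$ ($m\in\mathbb Z$) and $k\in\mathbb Z$, $h_{\infty,m,k}(t)=\bar\gamma_m^{-1/2}h_\infty(-\bar\gamma_m^{-1}t+k)$. *)

theory Defs
  imports "HOL-Analysis.Analysis"
begin

definition L2_fun :: "(real \<Rightarrow> complex) \<Rightarrow> bool" where
  "L2_fun f \<longleftrightarrow> f \<in> borel_measurable lborel \<and> integrable lborel (\<lambda>t. (cmod (f t))\<^sup>2)"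

definition trunc_fourier :: "(real \<Rightarrow> complex) \<Rightarrow> real \<Rightarrow> real \<Rightarrow> complex" where
  "trunc_fourier \<theta> R \<xi> = (LBINT t=-R..R. \<theta> t * exp (- \<i> * complex_of_real (t * \<xi>)))"

text \<open>g is (a representative of) the L2 (Plancherel) Fourier transform of theta:
  the L2 limit of the truncated Fourier integrals.\<close>
definition fourier_L2 :: "(real \<Rightarrow> complex) \<Rightarrow> (real \<Rightarrow> complex) \<Rightarrow> bool" where
  "fourier_L2 \<theta> g \<longleftrightarrow> L2_fun \<theta> \<and> L2_fun g \<and>
     ((\<lambda>R. \<integral>\<^sup>+ \<xi>. ennreal ((cmod (g \<xi> - trunc_fourier \<theta> R \<xi>))\<^sup>2) \<partial>lborel)
        \<longlongrightarrow> 0) at_top"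

definition S_class :: "nat \<Rightarrow> nat \<Rightarrow> real \<Rightarrow> (real \<Rightarrow> complex) \<Rightarrow> bool" where
  "S_class K q d \<theta> \<longleftrightarrow> L2_fun \<theta> \<and> (\<exists>g. fourier_L2 \<theta> g \<and>
     (\<integral>\<^sup>+ \<xi>. ennreal ((cmod (g \<xi>))\<^sup>2 * \<bar>\<xi>\<bar> powr (real q - 1 - 2 * d * real q - 2 * real K)) \<partial>lborel) < \<infinity>)"

definition qfold_integral :: "nat \<Rightarrow> nat \<Rightarrow> real \<Rightarrow> (real \<Rightarrow> complex) \<Rightarrow> ennreal" where
  "qfold_integral K q d g = (\<integral>\<^sup>+ u. ennreal ((cmod (g (\<Sum>i<q. u i)))\<^sup>2 /
        (\<bar>\<Sum>i<q. u i\<bar> ^ (2 * K) * \<bar>\<Prod>i<q. u i\<bar> powr (2 * d)))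
      \<partial>(PiM {..<q} (\<lambda>_. lborel)))"

definition h_mk :: "(real \<Rightarrow> complex) \<Rightarrow> (int \<Rightarrow> real) \<Rightarrow> int \<Rightarrow> int \<Rightarrow> real \<Rightarrow> complex" where
  "h_mk h \<gamma> m k t = complex_of_real (\<gamma> m powr (-1/2)) * h (- t / \<gamma> m + real_of_int k)"

end

theory Submission
  imports Defs "HOL-Probability.Probability"
begin

lemma nn_sym_bound:
  fixes F :: "real \<Rightarrow> ennreal"
  assumes [measurable]: "F \<in> borel_measurable borel"
  shows "(\<integral>\<^sup>+x. F x \<partial>lborel) \<le> (\<integral>\<^sup>+x. indicator {0..} x * F x \<partial>lborel) + (\<integral>\<^sup>+x. indicator {0..} x * F (-x) \<partial>lborel)"
proof -
  have "(\<integral>\<^sup>+x. F x \<partial>lborel) \<le> (\<integral>\<^sup>+x. indicator {0..} x * F x + indicator {0..} (-x) * F x \<partial>lborel)"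
    by (intro nn_integral_mono) (auto simp: indicator_def)
  also have "\<dots> = (\<integral>\<^sup>+x. indicator {0..} x * F x \<partial>lborel) + (\<integral>\<^sup>+x. indicator {0..} (-x) * F x \<partial>lborel)"
    by (intro nn_integral_add) auto
  also have "(\<integral>\<^sup>+x. indicator {0..} (-x) * F x \<partial>lborel) = (\<integral>\<^sup>+x. indicator {0..} x * F (-x) \<partial>lborel)"
    by (subst nn_integral_real_affine[where c="-1" and t=0]) auto
  finally show ?thesis .
qed

lemma fin_powr_0:
  assumes "a > -1"
  shows "(\<integral>\<^sup>+x. indicator {-1..1} x * ennreal (\<bar>x\<bar> powr a) \<partial>lborel) < \<infinity>"
proof -
  have h: "(\<integral>\<^sup>+x. ennreal (x powr a) * indicator {0..1} x \<partial>lborel) = ennreal (1 powr (a+1) / (a+1))"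
    by (rule nn_integral_has_integral_lebesgue'[OF _ has_integral_powr_from_0]) (use assms in auto)
  have e: "(\<integral>\<^sup>+x. indicator {0..} x * (indicator {-1..1} x * ennreal (\<bar>x\<bar> powr a)) \<partial>lborel)
      = (\<integral>\<^sup>+x. ennreal (x powr a) * indicator {0..1} x \<partial>lborel)"
    by (intro nn_integral_cong) (auto simp: indicator_def)
  have e2: "(\<integral>\<^sup>+x. indicator {0..} x * (indicator {-1..1} (-x) * ennreal (\<bar>x\<bar> powr a)) \<partial>lborel)
      = (\<integral>\<^sup>+x. ennreal (x powr a) * indicator {0..1} x \<partial>lborel)"
    by (intro nn_integral_cong) (auto simp: indicator_def)
  show ?thesis
    by (rule le_less_trans[OF nn_sym_bound]) (auto simp: e e2 h)
qed

lemma fin_powr_inf: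
  assumes "b < -1"
  shows "(\<integral>\<^sup>+x. indicator (- {-1<..<1}) x * ennreal (\<bar>x\<bar> powr b) \<partial>lborel) < \<infinity>"
proof -
  have h: "(\<integral>\<^sup>+x. ennreal (x powr b) * indicator {1..} x \<partial>lborel) = ennreal (-(1 powr (b+1)) / (b+1))"
    by (rule nn_integral_has_integral_lebesgue'[OF _ has_integral_powr_to_inf]) (use assms in auto)
  have e: "(\<integral>\<^sup>+x. indicator {0..} x * (indicator (- {-1<..<1}) x * ennreal (\<bar>x\<bar> powr b)) \<partial>lborel)
      = (\<integral>\<^sup>+x. ennreal (x powr b) * indicator {1..} x \<partial>lborel)"
    by (intro nn_integral_cong) (auto simp: indicator_def)
  have e2: "(\<integral>\<^sup>+x. indicator {0..} x * (indicator (- {-1<..<1}) (-x) * ennreal (\<bar>x\<bar> powr b)) \<partial>lborel)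
      = (\<integral>\<^sup>+x. ennreal (x powr b) * indicator {1..} x \<partial>lborel)"
    by (intro nn_integral_cong) (auto simp: indicator_def)
  show ?thesis
    by (rule le_less_trans[OF nn_sym_bound]) (auto simp: e e2 h)
qed

lemma pt_bound:
  fixes a b t :: real
  assumes a: "a \<le> 0" and b: "b \<le> 0"
  defines "K \<equiv> 2 powr (-a) * 2 powr (-b)"
  shows "\<bar>1-t\<bar> powr b * \<bar>t\<bar> powr a \<le> K * (indicator {-1..1} t * \<bar>t\<bar> powr a
     + indicator {-1..1} (1-t) * \<bar>1-t\<bar> powr b + indicator {-2..2} t
     + indicator (- {-1<..<1}) t * \<bar>t\<bar> powr (a+b))"
proof -
  have A1: "1 \<le> 2 powr (-a)" using a by (intro ge_one_powr_ge_zero) auto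
  have B1: "1 \<le> 2 powr (-b)" using b by (intro ge_one_powr_ge_zero) auto
  have h2a: "(1/2) powr a = 2 powr (-a)" by (metis inverse_eq_divide inverse_powr powr_minus)
  have h2b: "(1/2) powr b = 2 powr (-b)" by (metis inverse_eq_divide inverse_powr powr_minus)
  have K0: "K \<ge> 1" proof -
    have "1*1 \<le> 2 powr (-a) * 2 powr (-b)" by (rule mult_mono) (use A1 B1 in auto)
    then show ?thesis unfolding K_def by simp
  qed
  define S where "S = indicator {-1..1} t * \<bar>t\<bar> powr a
     + indicator {-1..1} (1-t) * \<bar>1-t\<bar> powr b + indicator {-2..2} t
     + indicator (- {-1<..<1}) t * \<bar>t\<bar> powr (a+b)"
  have S0: "0 \<le> indicator {-1..1} t * \<bar>t\<bar> powr a" "0 \<le> indicator {-1..1} (1-t) * \<bar>1-t\<bar> powr b"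
     "0 \<le> (indicator {-2..2} t :: real)" "0 \<le> indicator (- {-1<..<1}) t * \<bar>t\<bar> powr (a+b)"
    by (auto simp: indicator_def)
  consider "t = 0 \<or> t = 1" | "t \<noteq> 0" "t \<noteq> 1" "\<bar>t\<bar> \<le> 1/2" | "t \<noteq> 0" "t \<noteq> 1" "\<bar>1-t\<bar> \<le> 1/2"
    | "\<bar>t\<bar> \<ge> 2" | "\<bar>t\<bar> > 1/2" "\<bar>1-t\<bar> > 1/2" "\<bar>t\<bar> < 2" by linarith
  then have "\<bar>1-t\<bar> powr b * \<bar>t\<bar> powr a \<le> K * S"
  proof cases
    case 1 then show ?thesis using S0 K0 unfolding S_def by auto
  next
    case 2
    have "\<bar>1-t\<bar> powr b \<le> (1/2) powr b" using 2 b by (intro powr_mono2') auto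
    then have "\<bar>1-t\<bar> powr b * \<bar>t\<bar> powr a \<le> 2 powr (-b) * \<bar>t\<bar> powr a"
      using h2b by (simp add: mult_right_mono)
    also have "\<dots> \<le> K * (indicator {-1..1} t * \<bar>t\<bar> powr a)"
      using 2 A1 unfolding K_def by (auto simp: indicator_def mult_right_mono)
    also have "\<dots> \<le> K * S" unfolding S_def using S0 K0 by (intro mult_left_mono) auto
    finally show ?thesis .
  next
    case 3
    have "\<bar>t\<bar> powr a \<le> (1/2) powr a" using 3 a by (intro powr_mono2') (auto simp: abs_if split: if_splits)
    then have "\<bar>1-t\<bar> powr b * \<bar>t\<bar> powr a \<le> \<bar>1-t\<bar> powr b * 2 powr (-a)"
      using h2a by (simp add: mult_left_mono)
    also have "\<dots> \<le> K * (indicator {-1..1} (1-t) * \<bar>1-t\<bar> powr b)"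
      using 3 B1 unfolding K_def by (auto simp: indicator_def mult_right_mono abs_if split: if_splits)
    also have "\<dots> \<le> K * S" unfolding S_def using S0 K0 by (intro mult_left_mono) auto
    finally show ?thesis .
  next
    case 4
    have "\<bar>1-t\<bar> powr b \<le> (\<bar>t\<bar>/2) powr b" using 4 b by (intro powr_mono2') (auto simp: abs_if split: if_splits)
    also have "\<dots> = 2 powr (-b) * \<bar>t\<bar> powr b" by (metis divide_inverse mult.commute powr_divide powr_minus)
    finally have X: "\<bar>1-t\<bar> powr b \<le> 2 powr (-b) * \<bar>t\<bar> powr b" .
    have "\<bar>1-t\<bar> powr b * \<bar>t\<bar> powr a \<le> (2 powr (-b) * \<bar>t\<bar> powr b) * \<bar>t\<bar> powr a"
      by (rule mult_right_mono[OF X]) simp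
    then have "\<bar>1-t\<bar> powr b * \<bar>t\<bar> powr a \<le> 2 powr (-b) * \<bar>t\<bar> powr (a+b)"
      by (simp add: powr_add mult_ac)
    also have "\<dots> \<le> K * (indicator (- {-1<..<1}) t * \<bar>t\<bar> powr (a+b))"
      using 4 A1 unfolding K_def by (auto simp: indicator_def mult_right_mono)
    also have "\<dots> \<le> K * S" unfolding S_def using S0 K0 by (intro mult_left_mono) auto
    finally show ?thesis .
  next
    case 5
    have "\<bar>t\<bar> powr a \<le> (1/2) powr a" using 5 a by (intro powr_mono2') auto
    moreover have "\<bar>1-t\<bar> powr b \<le> (1/2) powr b" using 5 b by (intro powr_mono2') auto
    ultimately have "\<bar>1-t\<bar> powr b * \<bar>t\<bar> powr a \<le> K"
      unfolding K_def h2a h2b by (simp add: mult.commute mult_mono)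
    also have "\<dots> \<le> K * S" unfolding S_def using S0 K0 5 by (auto simp: indicator_def)
    finally show ?thesis .
  qed
  then show ?thesis unfolding S_def .
qed

lemma ennreal_sum4: "0\<le>x1 \<Longrightarrow> 0\<le>x2 \<Longrightarrow> 0\<le>x3 \<Longrightarrow> 0\<le>x4 \<Longrightarrow> ennreal (x1+x2+x3+x4) = (ennreal x1 + ennreal x2) + (ennreal x3 + ennreal x4)"
  by (simp add: ennreal_plus[symmetric] add.assoc del: ennreal_plus)

lemma ennreal_ind_mult: "ennreal (indicator A x * y) = indicator A x * ennreal y"
  by (auto simp: indicator_def)

lemma key_fin:
  fixes a b :: real
  assumes a1: "-1 < a" and a0: "a \<le> 0" and b1: "-1 < b" and b0: "b \<le> 0" and ab: "a + b < -1"
  shows "(\<integral>\<^sup>+t. ennreal (\<bar>1-t\<bar> powr b * \<bar>t\<bar> powr a) \<partial>lborel) < \<infinity>"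
proof -
  define K where "K = 2 powr (-a) * 2 powr (-b)"
  have "(\<integral>\<^sup>+t. ennreal (\<bar>1-t\<bar> powr b * \<bar>t\<bar> powr a) \<partial>lborel) \<le>
     (\<integral>\<^sup>+t. ennreal K * ((indicator {-1..1} t * ennreal (\<bar>t\<bar> powr a)
     + indicator {-1..1} (1-t) * ennreal (\<bar>1-t\<bar> powr b)) + (indicator {-2..2} t
     + indicator (- {-1<..<1}) t * ennreal (\<bar>t\<bar> powr (a+b)))) \<partial>lborel)"
  proof (intro nn_integral_mono)
    fix t :: real
    have "ennreal (\<bar>1-t\<bar> powr b * \<bar>t\<bar> powr a) \<le> ennreal (K * (indicator {-1..1} t * \<bar>t\<bar> powr a
     + indicator {-1..1} (1-t) * \<bar>1-t\<bar> powr b + indicator {-2..2} t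
     + indicator (- {-1<..<1}) t * \<bar>t\<bar> powr (a+b)))"
      unfolding K_def by (intro ennreal_leI pt_bound a0 b0)
    also have "\<dots> = ennreal K * ((indicator {-1..1} t * ennreal (\<bar>t\<bar> powr a)
     + indicator {-1..1} (1-t) * ennreal (\<bar>1-t\<bar> powr b)) + (indicator {-2..2} t
     + indicator (- {-1<..<1}) t * ennreal (\<bar>t\<bar> powr (a+b))))"
      unfolding K_def
      by (subst ennreal_mult, simp, simp, subst ennreal_sum4) (auto simp: ennreal_ind_mult ennreal_indicator)
    finally show "ennreal (\<bar>1-t\<bar> powr b * \<bar>t\<bar> powr a) \<le> \<dots>" .
  qed
  also have "\<dots> = ennreal K * (((\<integral>\<^sup>+t. indicator {-1..1} t * ennreal (\<bar>t\<bar> powr a) \<partial>lborel)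
     + (\<integral>\<^sup>+t. indicator {-1..1} (1-t) * ennreal (\<bar>1-t\<bar> powr b) \<partial>lborel)) + 
     ((\<integral>\<^sup>+t. indicator {-2..2::real} t \<partial>lborel)
     + (\<integral>\<^sup>+t. indicator (- {-1<..<1}) t * ennreal (\<bar>t\<bar> powr (a+b)) \<partial>lborel)))"
    by (simp add: nn_integral_cmult nn_integral_add)
  also have "\<dots> < \<infinity>"
  proof -
    have p2: "(\<integral>\<^sup>+t. indicator {-1..1} (1-t) * ennreal (\<bar>1-t\<bar> powr b) \<partial>lborel) =
       (\<integral>\<^sup>+t. indicator {-1..1} t * ennreal (\<bar>t\<bar> powr b) \<partial>lborel)"
      by (subst (2) nn_integral_real_affine[where t=1 and c="-1"]) auto
    have p3: "(\<integral>\<^sup>+t. indicator {-2..2::real} t \<partial>lborel) = 4" by simp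
    show ?thesis
      using fin_powr_0[OF a1] fin_powr_0[OF b1] fin_powr_inf[OF ab]
      by (simp add: p2 p3 ennreal_mult_less_top)
  qed
  finally show ?thesis .
qed

lemma key_scale:
  fixes a b \<xi> :: real
  assumes "\<xi> \<noteq> 0"
  shows "(\<integral>\<^sup>+s. ennreal (\<bar>\<xi> - s\<bar> powr b * \<bar>s\<bar> powr a) \<partial>lborel)
     = ennreal (\<bar>\<xi>\<bar> powr (1+a+b)) * (\<integral>\<^sup>+t. ennreal (\<bar>1-t\<bar> powr b * \<bar>t\<bar> powr a) \<partial>lborel)"
proof -
  have "(\<integral>\<^sup>+s. ennreal (\<bar>\<xi> - s\<bar> powr b * \<bar>s\<bar> powr a) \<partial>lborel)
     = \<bar>\<xi>\<bar> * (\<integral>\<^sup>+t. ennreal (\<bar>\<xi> - (0 + \<xi> * t)\<bar> powr b * \<bar>0 + \<xi> * t\<bar> powr a) \<partial>lborel)"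
    by (rule nn_integral_real_affine) (use assms in auto)
  also have "(\<lambda>t. ennreal (\<bar>\<xi> - (0 + \<xi> * t)\<bar> powr b * \<bar>0 + \<xi> * t\<bar> powr a)) =
      (\<lambda>t. ennreal (\<bar>\<xi>\<bar> powr (a+b)) * ennreal (\<bar>1-t\<bar> powr b * \<bar>t\<bar> powr a))"
  proof
    fix t
    have "\<xi> - (0 + \<xi> * t) = \<xi> * (1 - t)" by (simp add: algebra_simps)
    then show "ennreal (\<bar>\<xi> - (0 + \<xi> * t)\<bar> powr b * \<bar>0 + \<xi> * t\<bar> powr a) =
      ennreal (\<bar>\<xi>\<bar> powr (a+b)) * ennreal (\<bar>1-t\<bar> powr b * \<bar>t\<bar> powr a)"
      by (simp add: abs_mult powr_mult powr_add ennreal_mult'[symmetric] mult_ac)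
  qed
  also have "ennreal \<bar>\<xi>\<bar> * (\<integral>\<^sup>+t. ennreal (\<bar>\<xi>\<bar> powr (a+b)) * ennreal (\<bar>1-t\<bar> powr b * \<bar>t\<bar> powr a) \<partial>lborel)
     = ennreal (\<bar>\<xi>\<bar> * \<bar>\<xi>\<bar> powr (a+b)) * (\<integral>\<^sup>+t. ennreal (\<bar>1-t\<bar> powr b * \<bar>t\<bar> powr a) \<partial>lborel)"
    by (simp add: nn_integral_cmult ennreal_mult mult.assoc)
  also have "\<bar>\<xi>\<bar> * \<bar>\<xi>\<bar> powr (a+b) = \<bar>\<xi>\<bar> powr (1+a+b)"
    using assms by (simp add: powr_add)
  finally show ?thesis .
qed

interpretation PL: product_sigma_finite "\<lambda>_::nat. lborel :: real measure"
  by (simp add: product_sigma_finite_def lborel.sigma_finite_measure_axioms)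

lemma riesz_step:
  fixes d a c :: real and n :: nat
  assumes d: "0 < d" "d < 1/2" and a1: "-1 < a" "a \<le> 0" "a - 2*d < -1"
    and IH: "\<And>G::real\<Rightarrow>ennreal. G \<in> borel_measurable borel \<Longrightarrow>
     (\<integral>\<^sup>+u. G (\<Sum>i<n. u i) * (\<Prod>i<n. ennreal (\<bar>u i\<bar> powr (-2*d))) \<partial>PiM {..<n} (\<lambda>_. lborel))
      \<le> ennreal c * (\<integral>\<^sup>+\<xi>. G \<xi> * ennreal (\<bar>\<xi>\<bar> powr a) \<partial>lborel)"
    and F[measurable]: "F \<in> borel_measurable borel"
  shows "(\<integral>\<^sup>+u. F (\<Sum>i<Suc n. u i) * (\<Prod>i<Suc n. ennreal (\<bar>u i\<bar> powr (-2*d))) \<partial>PiM {..<Suc n} (\<lambda>_. lborel))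
      \<le> ennreal c * (\<integral>\<^sup>+t. ennreal (\<bar>1-t\<bar> powr (-2*d) * \<bar>t\<bar> powr a) \<partial>lborel) * (\<integral>\<^sup>+\<xi>. F \<xi> * ennreal (\<bar>\<xi>\<bar> powr (1 + a - 2*d)) \<partial>lborel)"
proof -
  define B where "B = (\<integral>\<^sup>+t. ennreal (\<bar>1-t\<bar> powr (-2*d) * \<bar>t\<bar> powr a) \<partial>lborel)"
  define G where "G = (\<lambda>s. \<integral>\<^sup>+y. F (s + y) * ennreal (\<bar>y\<bar> powr (-2*d)) \<partial>lborel)"
  have G[measurable]: "G \<in> borel_measurable borel" unfolding G_def by measurable
  have ins: "{..<Suc n} = insert n {..<n}" by auto
  have "(\<integral>\<^sup>+u. F (\<Sum>i<Suc n. u i) * (\<Prod>i<Suc n. ennreal (\<bar>u i\<bar> powr (-2*d))) \<partial>PiM {..<Suc n} (\<lambda>_. lborel))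
     = (\<integral>\<^sup>+x. \<integral>\<^sup>+y. F (\<Sum>i<Suc n. (x(n:=y)) i) * (\<Prod>i<Suc n. ennreal (\<bar>(x(n:=y)) i\<bar> powr (-2*d))) \<partial>lborel \<partial>PiM {..<n} (\<lambda>_. lborel))"
    unfolding ins by (rule PL.product_nn_integral_insert) auto
  also have "\<dots> = (\<integral>\<^sup>+x. G (\<Sum>i<n. x i) * (\<Prod>i<n. ennreal (\<bar>x i\<bar> powr (-2*d))) \<partial>PiM {..<n} (\<lambda>_. lborel))"
  proof (intro nn_integral_cong)
    fix x :: "nat \<Rightarrow> real"
    have s: "(\<Sum>i<n. (x(n:=y)) i) = (\<Sum>i<n. x i)" for y by (intro sum.cong) auto
    have p: "(\<Prod>i<n. ennreal (\<bar>(x(n:=y)) i\<bar> powr (-2*d))) = (\<Prod>i<n. ennreal (\<bar>x i\<bar> powr (-2*d)))" for y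
      by (intro prod.cong) auto
    have "(\<integral>\<^sup>+y. F (\<Sum>i<Suc n. (x(n:=y)) i) * (\<Prod>i<Suc n. ennreal (\<bar>(x(n:=y)) i\<bar> powr (-2*d))) \<partial>lborel)
       = (\<integral>\<^sup>+y. F ((\<Sum>i<n. x i) + y) * ennreal (\<bar>y\<bar> powr (-2*d)) * (\<Prod>i<n. ennreal (\<bar>x i\<bar> powr (-2*d))) \<partial>lborel)"
      by (intro nn_integral_cong) (simp add: s p mult_ac)
    also have "\<dots> = G (\<Sum>i<n. x i) * (\<Prod>i<n. ennreal (\<bar>x i\<bar> powr (-2*d)))"
      unfolding G_def by (rule nn_integral_multc) measurable
    finally show "(\<integral>\<^sup>+y. F (\<Sum>i<Suc n. (x(n:=y)) i) * (\<Prod>i<Suc n. ennreal (\<bar>(x(n:=y)) i\<bar> powr (-2*d))) \<partial>lborel)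
       = G (\<Sum>i<n. x i) * (\<Prod>i<n. ennreal (\<bar>x i\<bar> powr (-2*d)))" .
  qed
  also have "\<dots> \<le> ennreal c * (\<integral>\<^sup>+s. G s * ennreal (\<bar>s\<bar> powr a) \<partial>lborel)"
    by (rule IH[OF G])
  also have "(\<integral>\<^sup>+s. G s * ennreal (\<bar>s\<bar> powr a) \<partial>lborel)
      = (\<integral>\<^sup>+s. \<integral>\<^sup>+\<xi>. F \<xi> * ennreal (\<bar>\<xi> - s\<bar> powr (-2*d)) * ennreal (\<bar>s\<bar> powr a) \<partial>lborel \<partial>lborel)"
  proof (intro nn_integral_cong)
    fix s :: real
    have "G s * ennreal (\<bar>s\<bar> powr a) = (\<integral>\<^sup>+y. F (s + y) * ennreal (\<bar>y\<bar> powr (-2*d)) * ennreal (\<bar>s\<bar> powr a) \<partial>lborel)"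
      unfolding G_def by (rule nn_integral_multc[symmetric]) measurable
    also have "\<dots> = (\<integral>\<^sup>+\<xi>. F \<xi> * ennreal (\<bar>\<xi> - s\<bar> powr (-2*d)) * ennreal (\<bar>s\<bar> powr a) \<partial>lborel)"
      by (subst (2) nn_integral_real_affine[where t=s and c=1]) auto
    finally show "G s * ennreal (\<bar>s\<bar> powr a) = \<dots>" .
  qed
  also have "\<dots> = (\<integral>\<^sup>+\<xi>. \<integral>\<^sup>+s. F \<xi> * ennreal (\<bar>\<xi> - s\<bar> powr (-2*d)) * ennreal (\<bar>s\<bar> powr a) \<partial>lborel \<partial>lborel)"
    by (rule lborel_pair.Fubini') measurable
  also have "\<dots> = (\<integral>\<^sup>+\<xi>. F \<xi> * (\<integral>\<^sup>+s. ennreal (\<bar>\<xi> - s\<bar> powr (-2*d) * \<bar>s\<bar> powr a) \<partial>lborel) \<partial>lborel)"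
    by (intro nn_integral_cong) (simp add: nn_integral_cmult[symmetric] ennreal_mult' mult.assoc)
  also have "\<dots> = (\<integral>\<^sup>+\<xi>. F \<xi> * (ennreal (\<bar>\<xi>\<bar> powr (1 + a - 2*d)) * B) \<partial>lborel)"
  proof (intro nn_integral_cong_AE)
    show "AE \<xi> in lborel. F \<xi> * (\<integral>\<^sup>+s. ennreal (\<bar>\<xi> - s\<bar> powr (-2*d) * \<bar>s\<bar> powr a) \<partial>lborel)
         = F \<xi> * (ennreal (\<bar>\<xi>\<bar> powr (1 + a - 2*d)) * B)"
      using AE_lborel_singleton[of 0]
    proof eventually_elim
      case (elim \<xi>)
      then show ?case unfolding B_def by (subst key_scale) (auto simp: algebra_simps)
    qed
  qed
  also have "\<dots> = B * (\<integral>\<^sup>+\<xi>. F \<xi> * ennreal (\<bar>\<xi>\<bar> powr (1 + a - 2*d)) \<partial>lborel)"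
    by (subst nn_integral_cmult[symmetric]) (auto simp: mult_ac)
  finally show ?thesis unfolding B_def by (simp add: mult_ac mult_left_mono)
qed

lemma riesz:
  fixes d :: real
  assumes d: "0 < d" "d < 1/2"
  shows "1 \<le> n \<Longrightarrow> real n * (1 - 2*d) < 1 \<Longrightarrow> \<exists>c. \<forall>F::real\<Rightarrow>ennreal. F \<in> borel_measurable borel \<longrightarrow>
     (\<integral>\<^sup>+u. F (\<Sum>i<n. u i) * (\<Prod>i<n. ennreal (\<bar>u i\<bar> powr (-2*d))) \<partial>PiM {..<n} (\<lambda>_. lborel))
      \<le> ennreal c * (\<integral>\<^sup>+\<xi>. F \<xi> * ennreal (\<bar>\<xi>\<bar> powr (real n * (1 - 2*d) - 1)) \<partial>lborel)"
proof (induction n)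
  case 0 then show ?case by simp
next
  case (Suc n)
  show ?case
  proof (cases "n = 0")
    case True
    show ?thesis
    proof (intro exI[of _ 1] allI impI)
      fix F :: "real \<Rightarrow> ennreal" assume [measurable]: "F \<in> borel_measurable borel"
      have "(\<integral>\<^sup>+u. F (\<Sum>i<Suc n. u i) * (\<Prod>i<Suc n. ennreal (\<bar>u i\<bar> powr (-2*d))) \<partial>PiM {..<Suc n} (\<lambda>_. lborel))
         = (\<integral>\<^sup>+u. F (u 0) * ennreal (\<bar>u 0\<bar> powr (-2*d)) \<partial>PiM {0::nat} (\<lambda>_. lborel))"
        using True by (simp add: lessThan_Suc)
      also have "\<dots> = (\<integral>\<^sup>+x. F x * ennreal (\<bar>x\<bar> powr (-2*d)) \<partial>lborel)"
        by (rule PL.product_nn_integral_singleton) measurable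
      finally show "(\<integral>\<^sup>+u. F (\<Sum>i<Suc n. u i) * (\<Prod>i<Suc n. ennreal (\<bar>u i\<bar> powr (-2*d))) \<partial>PiM {..<Suc n} (\<lambda>_. lborel))
         \<le> ennreal 1 * (\<integral>\<^sup>+\<xi>. F \<xi> * ennreal (\<bar>\<xi>\<bar> powr (real (Suc n) * (1 - 2*d) - 1)) \<partial>lborel)"
        using True by simp
    qed
  next
    case False
    have n1: "1 \<le> n" using False by simp
    have lt: "real n * (1 - 2*d) < 1" using Suc.prems d by (simp add: algebra_simps)
    from Suc.IH[OF n1 lt] obtain c where c: "\<And>F::real\<Rightarrow>ennreal. F \<in> borel_measurable borel \<Longrightarrow>
     (\<integral>\<^sup>+u. F (\<Sum>i<n. u i) * (\<Prod>i<n. ennreal (\<bar>u i\<bar> powr (-2*d))) \<partial>PiM {..<n} (\<lambda>_. lborel))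
      \<le> ennreal c * (\<integral>\<^sup>+\<xi>. F \<xi> * ennreal (\<bar>\<xi>\<bar> powr (real n * (1 - 2*d) - 1)) \<partial>lborel)" by blast
    define a where "a = real n * (1 - 2*d) - 1"
    have n1': "real n \<ge> 1" using n1 by simp
    have a1: "-1 < a" using d n1' unfolding a_def by (simp add: algebra_simps)
    have a0: "a \<le> 0" using lt unfolding a_def by simp
    have a2: "a - 2*d < -1" using Suc.prems unfolding a_def by (simp add: algebra_simps)
    define B where "B = (\<integral>\<^sup>+t. ennreal (\<bar>1-t\<bar> powr (-2*d) * \<bar>t\<bar> powr a) \<partial>lborel)"
    have Bfin: "B < \<infinity>" unfolding B_def using a1 a0 a2 d by (intro key_fin) auto
    show ?thesis
    proof (intro exI[of _ "c * enn2real B"] allI impI)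
      fix F :: "real \<Rightarrow> ennreal" assume F[measurable]: "F \<in> borel_measurable borel"
      have "(\<integral>\<^sup>+u. F (\<Sum>i<Suc n. u i) * (\<Prod>i<Suc n. ennreal (\<bar>u i\<bar> powr (-2*d))) \<partial>PiM {..<Suc n} (\<lambda>_. lborel))
        \<le> ennreal c * B * (\<integral>\<^sup>+\<xi>. F \<xi> * ennreal (\<bar>\<xi>\<bar> powr (1 + a - 2*d)) \<partial>lborel)"
        unfolding B_def using d a1 a0 a2 by (intro riesz_step c[unfolded a_def[symmetric]] F) auto
      also have "ennreal c * B = ennreal (c * enn2real B)"
      proof (cases "c \<ge> 0")
        case True then show ?thesis using Bfin by (simp add: ennreal_mult)
      next
        case False then show ?thesis by (simp add: ennreal_neg mult_nonpos_nonneg)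
      qed
      also have "1 + a - 2*d = real (Suc n) * (1 - 2*d) - 1" unfolding a_def by (simp add: algebra_simps)
      finally show "(\<integral>\<^sup>+u. F (\<Sum>i<Suc n. u i) * (\<Prod>i<Suc n. ennreal (\<bar>u i\<bar> powr (-2*d))) \<partial>PiM {..<Suc n} (\<lambda>_. lborel))
         \<le> ennreal (c * enn2real B) * (\<integral>\<^sup>+\<xi>. F \<xi> * ennreal (\<bar>\<xi>\<bar> powr (real (Suc n) * (1 - 2*d) - 1)) \<partial>lborel)" .
    qed
  qed
qed

lemma trunc_meas[measurable]:
  assumes [measurable]: "\<theta> \<in> borel_measurable borel"
  shows "trunc_fourier \<theta> R \<in> borel_measurable borel"
  unfolding trunc_fourier_def interval_lebesgue_integral_def set_lebesgue_integral_def einterval_def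
  by measurable

lemma sq_tri: "(cmod (a - b))\<^sup>2 \<le> 2 * (cmod (a - c))\<^sup>2 + 2 * (cmod (b - c))\<^sup>2"
proof -
  have "cmod (a - b) \<le> cmod (a - c) + cmod (b - c)"
    by (metis norm_diff_triangle_le norm_minus_commute order_refl)
  then have "(cmod (a - b))\<^sup>2 \<le> (cmod (a - c) + cmod (b - c))\<^sup>2" by (simp add: power_mono)
  also have "\<dots> \<le> 2 * (cmod (a - c))\<^sup>2 + 2 * (cmod (b - c))\<^sup>2"
    by (smt (verit) sum_squares_bound power2_sum)
  finally show ?thesis .
qed

lemma L2_unique:
  assumes f1: "fourier_L2 \<theta> g" and f2: "fourier_L2 \<theta> g'"
  shows "AE \<xi> in lborel. g \<xi> = g' \<xi>"
proof -
  have [measurable]: "g \<in> borel_measurable borel" "g' \<in> borel_measurable borel" "\<theta> \<in> borel_measurable borel"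
    using f1 f2 unfolding fourier_L2_def L2_fun_def by auto
  let ?a = "\<lambda>R. \<integral>\<^sup>+ \<xi>. ennreal ((cmod (g \<xi> - trunc_fourier \<theta> R \<xi>))\<^sup>2) \<partial>lborel"
  let ?b = "\<lambda>R. \<integral>\<^sup>+ \<xi>. ennreal ((cmod (g' \<xi> - trunc_fourier \<theta> R \<xi>))\<^sup>2) \<partial>lborel"
  have a: "(?a \<longlongrightarrow> 0) at_top" and b: "(?b \<longlongrightarrow> 0) at_top" using f1 f2 unfolding fourier_L2_def by auto
  have lim: "((\<lambda>R. 2 * ?a R + 2 * ?b R) \<longlongrightarrow> 0) at_top"
    using tendsto_add[OF tendsto_mult_ennreal[OF tendsto_const a] tendsto_mult_ennreal[OF tendsto_const b]] by simp
  have le: "(\<integral>\<^sup>+ \<xi>. ennreal ((cmod (g \<xi> - g' \<xi>))\<^sup>2) \<partial>lborel) \<le> 2 * ?a R + 2 * ?b R" for R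
  proof -
    have "(\<integral>\<^sup>+ \<xi>. ennreal ((cmod (g \<xi> - g' \<xi>))\<^sup>2) \<partial>lborel) \<le>
       (\<integral>\<^sup>+ \<xi>. 2 * ennreal ((cmod (g \<xi> - trunc_fourier \<theta> R \<xi>))\<^sup>2) + 2 * ennreal ((cmod (g' \<xi> - trunc_fourier \<theta> R \<xi>))\<^sup>2) \<partial>lborel)"
    proof (intro nn_integral_mono)
      fix x
      have "ennreal ((cmod (g x - g' x))\<^sup>2) \<le> ennreal (2 * (cmod (g x - trunc_fourier \<theta> R x))\<^sup>2 + 2 * (cmod (g' x - trunc_fourier \<theta> R x))\<^sup>2)"
        by (intro ennreal_leI sq_tri)
      also have "\<dots> = 2 * ennreal ((cmod (g x - trunc_fourier \<theta> R x))\<^sup>2) + 2 * ennreal ((cmod (g' x - trunc_fourier \<theta> R x))\<^sup>2)"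
        by (simp add: ennreal_plus ennreal_mult del: ennreal_plus_if)
      finally show "ennreal ((cmod (g x - g' x))\<^sup>2) \<le> 2 * ennreal ((cmod (g x - trunc_fourier \<theta> R x))\<^sup>2) + 2 * ennreal ((cmod (g' x - trunc_fourier \<theta> R x))\<^sup>2)" .
    qed
    also have "\<dots> = 2 * ?a R + 2 * ?b R"
      by (simp add: nn_integral_add nn_integral_cmult)
    finally show ?thesis .
  qed
  have "(\<integral>\<^sup>+ \<xi>. ennreal ((cmod (g \<xi> - g' \<xi>))\<^sup>2) \<partial>lborel) \<le> 0"
    by (rule tendsto_lowerbound[OF lim]) (auto intro: always_eventually le)
  then have "(\<integral>\<^sup>+ \<xi>. ennreal ((cmod (g \<xi> - g' \<xi>))\<^sup>2) \<partial>lborel) = 0" by simp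
  then have "AE \<xi> in lborel. ennreal ((cmod (g \<xi> - g' \<xi>))\<^sup>2) = 0"
    by (subst (asm) nn_integral_0_iff_AE) auto
  then show ?thesis by eventually_elim simp
qed

lemma qfold_pt:
  fixes u :: "nat \<Rightarrow> real" and G :: real and s :: real
  assumes "0 \<le> G"
  shows "ennreal (G / (\<bar>s\<bar> ^ (2 * K) * \<bar>\<Prod>i<q. u i\<bar> powr (2 * d)))
    = ennreal (G / \<bar>s\<bar> ^ (2 * K)) * (\<Prod>i<q. ennreal (\<bar>u i\<bar> powr (-2*d)))"
proof -
  have "\<bar>\<Prod>i<q. u i\<bar> powr (2 * d) = (\<Prod>i<q. \<bar>u i\<bar> powr (2*d))"
    by (simp add: abs_prod prod_powr_distrib)
  then have "inverse (\<bar>\<Prod>i<q. u i\<bar> powr (2 * d)) = (\<Prod>i<q. \<bar>u i\<bar> powr (-2*d))"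
    by (simp add: prod_inversef[symmetric] powr_minus)
  then have eq: "G / (\<bar>s\<bar> ^ (2 * K) * \<bar>\<Prod>i<q. u i\<bar> powr (2 * d)) = (G / \<bar>s\<bar> ^ (2 * K)) * (\<Prod>i<q. \<bar>u i\<bar> powr (-2*d))"
    by (simp add: divide_inverse mult.assoc)
  have "ennreal ((G / \<bar>s\<bar> ^ (2 * K)) * (\<Prod>i<q. \<bar>u i\<bar> powr (-2*d))) = ennreal (G / \<bar>s\<bar> ^ (2 * K)) * ennreal (\<Prod>i<q. \<bar>u i\<bar> powr (-2*d))"
    by (rule ennreal_mult) (simp_all add: assms prod_nonneg)
  also have "ennreal (\<Prod>i<q. \<bar>u i\<bar> powr (-2*d)) = (\<Prod>i<q. ennreal (\<bar>u i\<bar> powr (-2*d)))"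
    by (rule prod_ennreal[symmetric]) simp
  finally show ?thesis unfolding eq .
qed

theorem part1:
  fixes d :: real and q K :: nat
  assumes d: "0 < d" "d < 1/2" and q: "1 \<le> q" "real q < 1 / (1 - 2 * d)"
    and S: "S_class K q d \<theta>" and fg: "fourier_L2 \<theta> g"
  shows "qfold_integral K q d g < \<infinity>"
proof -
  from S obtain g' where fg': "fourier_L2 \<theta> g'" and fin:
    "(\<integral>\<^sup>+ \<xi>. ennreal ((cmod (g' \<xi>))\<^sup>2 * \<bar>\<xi>\<bar> powr (real q - 1 - 2 * d * real q - 2 * real K)) \<partial>lborel) < \<infinity>"
    unfolding S_class_def by blast
  have AEg: "AE \<xi> in lborel. g \<xi> = g' \<xi>" by (rule L2_unique[OF fg fg'])
  have [measurable]: "g \<in> borel_measurable borel" using fg unfolding fourier_L2_def L2_fun_def by auto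
  have qlt: "real q * (1 - 2*d) < 1" using q d by (simp add: field_simps)
  obtain c where c: "\<And>F::real\<Rightarrow>ennreal. F \<in> borel_measurable borel \<Longrightarrow>
     (\<integral>\<^sup>+u. F (\<Sum>i<q. u i) * (\<Prod>i<q. ennreal (\<bar>u i\<bar> powr (-2*d))) \<partial>PiM {..<q} (\<lambda>_. lborel))
      \<le> ennreal c * (\<integral>\<^sup>+\<xi>. F \<xi> * ennreal (\<bar>\<xi>\<bar> powr (real q * (1 - 2*d) - 1)) \<partial>lborel)"
    using riesz[OF d q(1) qlt] by blast
  define F where "F = (\<lambda>\<xi>. ennreal ((cmod (g \<xi>))\<^sup>2 / \<bar>\<xi>\<bar> ^ (2 * K)))"
  have [measurable]: "F \<in> borel_measurable borel" unfolding F_def by measurable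
  have "qfold_integral K q d g = (\<integral>\<^sup>+u. F (\<Sum>i<q. u i) * (\<Prod>i<q. ennreal (\<bar>u i\<bar> powr (-2*d))) \<partial>PiM {..<q} (\<lambda>_. lborel))"
    unfolding qfold_integral_def F_def by (intro nn_integral_cong qfold_pt) simp
  also have "\<dots> \<le> ennreal c * (\<integral>\<^sup>+\<xi>. F \<xi> * ennreal (\<bar>\<xi>\<bar> powr (real q * (1 - 2*d) - 1)) \<partial>lborel)"
    by (rule c) measurable
  also have "(\<integral>\<^sup>+\<xi>. F \<xi> * ennreal (\<bar>\<xi>\<bar> powr (real q * (1 - 2*d) - 1)) \<partial>lborel)
     = (\<integral>\<^sup>+ \<xi>. ennreal ((cmod (g' \<xi>))\<^sup>2 * \<bar>\<xi>\<bar> powr (real q - 1 - 2 * d * real q - 2 * real K)) \<partial>lborel)"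
  proof (intro nn_integral_cong_AE)
    show "AE \<xi> in lborel. F \<xi> * ennreal (\<bar>\<xi>\<bar> powr (real q * (1 - 2*d) - 1))
      = ennreal ((cmod (g' \<xi>))\<^sup>2 * \<bar>\<xi>\<bar> powr (real q - 1 - 2 * d * real q - 2 * real K))"
      using AEg AE_lborel_singleton[of 0]
    proof eventually_elim
      case (elim \<xi>)
      have pos: "\<bar>\<xi>\<bar> > 0" using elim by simp
      have "\<bar>\<xi>\<bar> powr (real q * (1 - 2*d) - 1) / \<bar>\<xi>\<bar> ^ (2 * K) = \<bar>\<xi>\<bar> powr (real q - 1 - 2 * d * real q - 2 * real K)"
      proof -
        have "\<bar>\<xi>\<bar> ^ (2 * K) = \<bar>\<xi>\<bar> powr (real (2 * K))" using pos by (metis of_nat_mult of_nat_numeral powr_realpow)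
        then show ?thesis by (simp add: powr_diff[symmetric] algebra_simps)
      qed
      then show ?case unfolding F_def using elim
        by (simp add: ennreal_mult'[symmetric] field_simps)
    qed
  qed
  finally show ?thesis using fin by (simp add: ennreal_mult_less_top order_le_less_trans)
qed

lemma cmod_e[simp]: "cmod (exp (- \<i> * complex_of_real r)) = 1"
  using norm_exp_i_times[of "-r"] by simp

lemma norm_bound_enn: "ennreal (norm (integral\<^sup>L M f)) \<le> (\<integral>\<^sup>+x. ennreal (norm (f x)) \<partial>M)"
  by (cases "integrable M f") (auto simp: integral_norm_bound_ennreal not_integrable_integral_eq)

lemma gauss_ft:
  fixes \<sigma> x :: real assumes s: "\<sigma> > 0"
  shows "(\<integral>\<eta>. complex_of_real (exp (-(\<eta>/\<sigma>)\<^sup>2/2)) * exp (\<i> * complex_of_real (x * \<eta>)) \<partial>lborel)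
     = complex_of_real (\<sigma> * sqrt (2*pi) * exp (-(\<sigma>*x)\<^sup>2/2))"
proof -
  have ch: "(\<integral>y. std_normal_density y *\<^sub>R iexp (t * y) \<partial>lborel) = complex_of_real (exp (- (t^2) / 2))" for t
  proof -
    have "char std_normal_distribution t = complex_of_real (exp (- (t^2) / 2))"
      by (simp add: char_std_normal_distribution)
    then show ?thesis unfolding char_def
      by (subst (asm) integral_density) auto
  qed
  have "(\<integral>\<eta>. complex_of_real (exp (-(\<eta>/\<sigma>)\<^sup>2/2)) * exp (\<i> * complex_of_real (x * \<eta>)) \<partial>lborel)
      = \<bar>\<sigma>\<bar> *\<^sub>R (\<integral>y. complex_of_real (exp (-((0 + \<sigma>*y)/\<sigma>)\<^sup>2/2)) * exp (\<i> * complex_of_real (x * (0 + \<sigma>*y))) \<partial>lborel)"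
    by (rule lborel_integral_real_affine) (use s in auto)
  also have "(\<lambda>y. complex_of_real (exp (-((0 + \<sigma>*y)/\<sigma>)\<^sup>2/2)) * exp (\<i> * complex_of_real (x * (0 + \<sigma>*y))))
     = (\<lambda>y. complex_of_real (sqrt (2*pi)) * (std_normal_density y *\<^sub>R iexp ((\<sigma>*x) * y)))"
    using s by (auto simp: std_normal_density_def scaleR_conv_of_real mult_ac)
  also have "(\<integral>y. complex_of_real (sqrt (2*pi)) * (std_normal_density y *\<^sub>R iexp ((\<sigma>*x) * y)) \<partial>lborel)
     = complex_of_real (sqrt (2*pi)) * complex_of_real (exp (- ((\<sigma>*x)^2) / 2))"
    by (simp only: integral_mult_right_zero ch)
  finally show ?thesis using s by (simp add: scaleR_conv_of_real mult_ac)
qed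

lemma gauss_nn:
  fixes \<sigma> :: real assumes s: "\<sigma> > 0"
  shows "(\<integral>\<^sup>+x. ennreal (\<sigma> * sqrt (2*pi) * exp (-(\<sigma>*x)\<^sup>2/2)) \<partial>lborel) = ennreal (2*pi)"
proof -
  have eq: "\<sigma> * sqrt (2*pi) * exp (-(\<sigma>*x)\<^sup>2/2) = 2*pi * normal_density 0 (1/\<sigma>) x" for x
  proof -
    have "sqrt (2 * pi * (1/\<sigma>)\<^sup>2) = sqrt (2*pi) / \<sigma>" using s
      by (simp add: real_sqrt_divide power_divide)
    moreover have "2*pi / (sqrt (2*pi)/\<sigma>) = \<sigma> * sqrt (2*pi)"
    proof -
      have r: "sqrt (2*pi) * sqrt (2*pi) = 2*pi" by simp
      have r0: "sqrt (2*pi) > 0" by simp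
      show ?thesis using s r r0 by (simp add: field_simps)
    qed
    ultimately have A: "2*pi / sqrt (2 * pi * (1/\<sigma>)\<^sup>2) = \<sigma> * sqrt (2*pi)" by simp
    have E: "-(x - 0)\<^sup>2 / (2 * (1/\<sigma>)\<^sup>2) = -(\<sigma>*x)\<^sup>2/2" using s
      by (simp add: power_divide power_mult_distrib field_simps)
    show ?thesis unfolding normal_density_def E A[symmetric] by simp
  qed
  have "(\<integral>\<^sup>+x. ennreal (normal_density 0 (1/\<sigma>) x) \<partial>lborel) = 1"
    using s integrable_normal_density[of "1/\<sigma>" 0] integral_normal_density[of "1/\<sigma>" 0]
    by (subst nn_integral_eq_integral) auto
  then show ?thesis unfolding eq
    by (subst ennreal_mult) (auto simp: nn_integral_cmult)
qed

lemma prod_integrable: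
  fixes H :: "real \<times> real \<Rightarrow> 'b::{banach, second_countable_topology}" and f g :: "real \<Rightarrow> real"
  assumes f: "integrable lborel f" and g: "integrable lborel g"
    and H[measurable]: "H \<in> borel_measurable (lborel \<Otimes>\<^sub>M lborel)"
    and b: "\<And>s t. norm (H (s,t)) \<le> norm (f s) * norm (g t)"
  shows "integrable (lborel \<Otimes>\<^sub>M lborel) H"
proof (rule integrableI_bounded)
  have [measurable]: "f \<in> borel_measurable borel" "g \<in> borel_measurable borel" using f g by auto
  have "(\<integral>\<^sup>+p. ennreal (norm (H p)) \<partial>(lborel \<Otimes>\<^sub>M lborel)) \<le> (\<integral>\<^sup>+p. ennreal (norm (f (fst p))) * ennreal (norm (g (snd p))) \<partial>(lborel \<Otimes>\<^sub>M lborel))"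
  proof (intro nn_integral_mono)
    fix p :: "real \<times> real"
    show "ennreal (norm (H p)) \<le> ennreal (norm (f (fst p))) * ennreal (norm (g (snd p)))"
      using b[of "fst p" "snd p"] by (cases p) (simp add: ennreal_mult'[symmetric] ennreal_leI)
  qed
  also have "\<dots> = (\<integral>\<^sup>+s. \<integral>\<^sup>+t. ennreal (norm (f s)) * ennreal (norm (g t)) \<partial>lborel \<partial>lborel)"
  proof -
    have "(\<integral>\<^sup>+s. \<integral>\<^sup>+t. (\<lambda>p. ennreal (norm (f (fst p))) * ennreal (norm (g (snd p)))) (s,t) \<partial>lborel \<partial>lborel)
       = (\<integral>\<^sup>+p. ennreal (norm (f (fst p))) * ennreal (norm (g (snd p))) \<partial>(lborel \<Otimes>\<^sub>M lborel))"
      by (rule lborel.nn_integral_fst) measurable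
    then show ?thesis by simp
  qed
  also have "\<dots> = (\<integral>\<^sup>+s. ennreal (norm (f s)) \<partial>lborel) * (\<integral>\<^sup>+t. ennreal (norm (g t)) \<partial>lborel)"
    by (simp add: nn_integral_cmult nn_integral_multc)
  also have "\<dots> < \<infinity>" using f g by (auto simp: integrable_iff_bounded ennreal_mult_less_top)
  finally show "(\<integral>\<^sup>+p. ennreal (norm (H p)) \<partial>(lborel \<Otimes>\<^sub>M lborel)) < \<infinity>" .
qed simp

lemma borel_measurable_cnj'[measurable (raw)]:
  fixes f :: "'a \<Rightarrow> complex"
  assumes [measurable]: "f \<in> borel_measurable M"
  shows "(\<lambda>x. cnj (f x)) \<in> borel_measurable M"
proof -
  have "(\<lambda>x. cnj (f x)) = (\<lambda>x. complex_of_real (Re (f x)) - \<i> * complex_of_real (Im (f x)))"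
    by (auto simp: complex_eq_iff)
  also have "\<dots> \<in> borel_measurable M" by measurable
  finally show ?thesis .
qed

lemma cnj_e_mult: "cnj (exp (- \<i> * complex_of_real (t*\<eta>))) * exp (- \<i> * complex_of_real (s*\<eta>)) = exp (\<i> * complex_of_real ((t-s)*\<eta>))"
proof -
  have "cnj (exp (- \<i> * complex_of_real (t*\<eta>))) = exp (\<i> * complex_of_real (t*\<eta>))"
    by (simp add: exp_cnj)
  then show ?thesis by (simp add: exp_add[symmetric] algebra_simps)
qed

lemma amgm_G: "0 \<le> G \<Longrightarrow> (a::real) * b * G \<le> a\<^sup>2/2 * G + b\<^sup>2/2 * G"
proof -
  assume G: "0 \<le> G"
  have "a * b \<le> a\<^sup>2/2 + b\<^sup>2/2" using sum_squares_bound[of a b] by (simp add: power2_eq_square)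
  then have "a * b * G \<le> (a\<^sup>2/2 + b\<^sup>2/2) * G" using G by (rule mult_right_mono)
  then show ?thesis by (simp add: algebra_simps)
qed

lemma plancherel_w:
  fixes \<phi> :: "real \<Rightarrow> complex" and \<sigma> :: real
  assumes s: "\<sigma> > 0" and \<phi>m[measurable]: "\<phi> \<in> borel_measurable borel"
    and \<phi>i: "integrable lborel \<phi>"
  shows "(\<integral>\<^sup>+\<eta>. ennreal (exp (-(\<eta>/\<sigma>)\<^sup>2/2) * (cmod (\<integral>s. \<phi> s * exp (-\<i> * complex_of_real (s*\<eta>)) \<partial>lborel))\<^sup>2) \<partial>lborel)
     \<le> ennreal (2*pi) * (\<integral>\<^sup>+s. ennreal ((cmod (\<phi> s))\<^sup>2) \<partial>lborel)"
proof -
  define e where "e = (\<lambda>s \<eta>::real. exp (-\<i> * complex_of_real (s*\<eta>)))"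
  define \<Phi> where "\<Phi> = (\<lambda>\<eta>. \<integral>s. \<phi> s * e s \<eta> \<partial>lborel)"
  define w where "w = (\<lambda>\<eta>::real. exp (-(\<eta>/\<sigma>)\<^sup>2/2))"
  define G where "G = (\<lambda>x::real. \<sigma> * sqrt (2*pi) * exp (-(\<sigma>*x)\<^sup>2/2))"
  define N1 where "N1 = (\<integral>s. cmod (\<phi> s) \<partial>lborel)"
  define A where "A = (\<integral>\<^sup>+s. ennreal ((cmod (\<phi> s))\<^sup>2) \<partial>lborel)"
  have em[measurable]: "(\<lambda>(s,\<eta>). e s \<eta>) \<in> borel_measurable (borel \<Otimes>\<^sub>M borel)" unfolding e_def by measurable
  have em2[measurable]: "e s \<in> borel_measurable borel" for s unfolding e_def by measurable
  have em3[measurable]: "(\<lambda>s. e s \<eta>) \<in> borel_measurable borel" for \<eta> unfolding e_def by measurable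
  have em4[measurable (raw)]: "f \<in> borel_measurable M \<Longrightarrow> g \<in> borel_measurable M \<Longrightarrow> (\<lambda>x. e (f x) (g x)) \<in> borel_measurable M"
    for f g :: "'z \<Rightarrow> real" and M unfolding e_def by measurable
  have \<Phi>m[measurable]: "\<Phi> \<in> borel_measurable borel" unfolding \<Phi>_def by measurable
  have wm[measurable]: "w \<in> borel_measurable borel" unfolding w_def by measurable
  have Gm[measurable]: "G \<in> borel_measurable borel" unfolding G_def by measurable
  have G0: "0 \<le> G x" for x unfolding G_def using s by simp
  have w0: "0 \<le> w x" for x unfolding w_def by simp
  have cmod_e: "cmod (e s \<eta>) = 1" for s \<eta> unfolding e_def by simp
  have \<Phi>b: "cmod (\<Phi> \<eta>) \<le> N1" for \<eta>
    unfolding \<Phi>_def N1_def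
    by (rule order_trans[OF integral_norm_bound]) (simp add: norm_mult cmod_e)
  have wi: "integrable lborel w"
  proof -
    have "w = (\<lambda>\<eta>. (\<sigma> * sqrt (2*pi)) * normal_density 0 \<sigma> \<eta>)"
    proof
      fix \<eta>
      have "sqrt (2 * pi * \<sigma>\<^sup>2) = sqrt (2*pi) * \<sigma>" using s by (simp add: real_sqrt_mult)
      moreover have "(\<eta>/\<sigma>)\<^sup>2/2 = (\<eta> - 0)\<^sup>2 / (2 * \<sigma>\<^sup>2)" using s by (simp add: power_divide)
      ultimately show "w \<eta> = (\<sigma> * sqrt (2*pi)) * normal_density 0 \<sigma> \<eta>"
        unfolding w_def normal_density_def using s by simp
    qed
    then show ?thesis using s by simp
  qed
  have gft: "(\<integral>\<eta>. complex_of_real (w \<eta>) * exp (\<i> * complex_of_real (x * \<eta>)) \<partial>lborel) = complex_of_real (G x)" for x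
    unfolding w_def G_def by (rule gauss_ft[OF s])
  have Gt1: "(\<integral>\<^sup>+t. ennreal (G (t - s)) \<partial>lborel) = ennreal (2*pi)" for s
  proof -
    have "(\<integral>\<^sup>+x. ennreal (G x) \<partial>lborel) = (\<integral>\<^sup>+x. ennreal (G (-s + 1 * x)) \<partial>lborel)"
      using nn_integral_real_affine[where f="\<lambda>x. ennreal (G x)" and c=1 and t="-s"] by simp
    then show ?thesis using gauss_nn[OF s] unfolding G_def by simp
  qed
  have Gt2: "(\<integral>\<^sup>+s. ennreal (G (t - s)) \<partial>lborel) = ennreal (2*pi)" for t
  proof -
    have "(\<integral>\<^sup>+x. ennreal (G x) \<partial>lborel) = (\<integral>\<^sup>+x. ennreal (G (t + (-1) * x)) \<partial>lborel)"
      using nn_integral_real_affine[where f="\<lambda>x. ennreal (G x)" and c="-1" and t=t] by simp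
    then show ?thesis using gauss_nn[OF s] unfolding G_def by simp
  qed
  define f1 where "f1 = (\<lambda>\<eta>. w \<eta> * (cmod (\<Phi> \<eta>))\<^sup>2)"
  have f1m[measurable]: "f1 \<in> borel_measurable borel" unfolding f1_def by measurable
  have f1i: "integrable lborel f1"
  proof (rule Bochner_Integration.integrable_bound[where f="\<lambda>\<eta>. w \<eta> * N1\<^sup>2"])
    show "integrable lborel (\<lambda>\<eta>. w \<eta> * N1\<^sup>2)" using wi by simp
    show "AE x in lborel. norm (f1 x) \<le> norm (w x * N1\<^sup>2)"
    proof (intro AE_I2)
      fix x
      have "(cmod (\<Phi> x))\<^sup>2 \<le> N1\<^sup>2" using \<Phi>b[of x] by (simp add: power_mono)
      then show "norm (f1 x) \<le> norm (w x * N1\<^sup>2)" unfolding f1_def using w0[of x]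
        by (simp add: abs_mult mult_left_mono)
    qed
  qed simp
  have step1: "(\<integral>\<^sup>+\<eta>. ennreal (f1 \<eta>) \<partial>lborel) = ennreal (\<integral>\<eta>. f1 \<eta> \<partial>lborel)"
    by (rule nn_integral_eq_integral[OF f1i]) (simp add: f1_def w0)
  have I0: "0 \<le> (\<integral>\<eta>. f1 \<eta> \<partial>lborel)" by (rule Bochner_Integration.integral_nonneg) (simp add: f1_def w0)
  have J: "(\<integral>\<eta>. complex_of_real (w \<eta>) * cnj (\<Phi> \<eta>) * e s \<eta> \<partial>lborel)
     = (\<integral>t. cnj (\<phi> t) * complex_of_real (G (t - s)) \<partial>lborel)" for s
  proof -
    have c1: "cnj (\<Phi> \<eta>) = (\<integral>t. cnj (\<phi> t * e t \<eta>) \<partial>lborel)" for \<eta> unfolding \<Phi>_def by (simp only: Bochner_Integration.integral_cnj)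
    have "(\<integral>\<eta>. complex_of_real (w \<eta>) * cnj (\<Phi> \<eta>) * e s \<eta> \<partial>lborel)
       = (\<integral>\<eta>. \<integral>t. complex_of_real (w \<eta>) * cnj (\<phi> t * e t \<eta>) * e s \<eta> \<partial>lborel \<partial>lborel)"
      by (intro Bochner_Integration.integral_cong refl) (simp add: c1)
    also have "\<dots> = (\<integral>t. \<integral>\<eta>. complex_of_real (w \<eta>) * cnj (\<phi> t * e t \<eta>) * e s \<eta> \<partial>lborel \<partial>lborel)"
    proof (rule lborel_pair.Fubini_integral[where f="\<lambda>t \<eta>. complex_of_real (w \<eta>) * cnj (\<phi> t * e t \<eta>) * e s \<eta>"])
      show "integrable (lborel \<Otimes>\<^sub>M lborel) (\<lambda>(t, \<eta>). complex_of_real (w \<eta>) * cnj (\<phi> t * e t \<eta>) * e s \<eta>)"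
      proof (rule prod_integrable[where f="\<lambda>t. cmod (\<phi> t)" and g=w])
        show "integrable lborel (\<lambda>t. cmod (\<phi> t))" using \<phi>i by simp
        show "integrable lborel w" by (rule wi)
        show "(\<lambda>(t, \<eta>). complex_of_real (w \<eta>) * cnj (\<phi> t * e t \<eta>) * e s \<eta>) \<in> borel_measurable (lborel \<Otimes>\<^sub>M lborel)"
          by measurable
        fix t \<eta> :: real
        show "norm (case (t, \<eta>) of (t, \<eta>) \<Rightarrow> complex_of_real (w \<eta>) * cnj (\<phi> t * e t \<eta>) * e s \<eta>) \<le> norm (cmod (\<phi> t)) * norm (w \<eta>)"
          using w0[of \<eta>] by (simp add: norm_mult cmod_e)
      qed
    qed
    also have "\<dots> = (\<integral>t. cnj (\<phi> t) * complex_of_real (G (t - s)) \<partial>lborel)"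
    proof (intro Bochner_Integration.integral_cong refl)
      fix t
      have fe: "(\<lambda>\<eta>. complex_of_real (w \<eta>) * cnj (\<phi> t * e t \<eta>) * e s \<eta>)
          = (\<lambda>\<eta>. cnj (\<phi> t) * (complex_of_real (w \<eta>) * exp (\<i> * complex_of_real ((t-s) * \<eta>))))"
      proof
        fix \<eta>
        have ce: "cnj (e t \<eta>) * e s \<eta> = exp (\<i> * complex_of_real ((t-s) * \<eta>))"
          unfolding e_def by (rule cnj_e_mult)
        have "complex_of_real (w \<eta>) * cnj (\<phi> t * e t \<eta>) * e s \<eta> = cnj (\<phi> t) * (complex_of_real (w \<eta>) * (cnj (e t \<eta>) * e s \<eta>))"
          by (simp add: mult_ac)
        then show "complex_of_real (w \<eta>) * cnj (\<phi> t * e t \<eta>) * e s \<eta> = cnj (\<phi> t) * (complex_of_real (w \<eta>) * exp (\<i> * complex_of_real ((t-s) * \<eta>)))"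
          by (simp only: ce)
      qed
      then show "(\<integral>\<eta>. complex_of_real (w \<eta>) * cnj (\<phi> t * e t \<eta>) * e s \<eta> \<partial>lborel) = cnj (\<phi> t) * complex_of_real (G (t - s))"
        unfolding fe by (simp only: integral_mult_right_zero gft)
    qed
    finally show ?thesis .
  qed
  have main: "complex_of_real (\<integral>\<eta>. f1 \<eta> \<partial>lborel) = (\<integral>s. \<phi> s * (\<integral>t. cnj (\<phi> t) * complex_of_real (G (t - s)) \<partial>lborel) \<partial>lborel)"
  proof -
    have "complex_of_real (\<integral>\<eta>. f1 \<eta> \<partial>lborel) = (\<integral>\<eta>. complex_of_real (f1 \<eta>) \<partial>lborel)" by simp
    also have "\<dots> = (\<integral>\<eta>. \<integral>s. complex_of_real (w \<eta>) * cnj (\<Phi> \<eta>) * (\<phi> s * e s \<eta>) \<partial>lborel \<partial>lborel)"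
    proof (intro Bochner_Integration.integral_cong refl)
      fix \<eta>
      have "complex_of_real (f1 \<eta>) = complex_of_real (w \<eta>) * cnj (\<Phi> \<eta>) * \<Phi> \<eta>"
        unfolding f1_def of_real_mult complex_norm_square by (simp add: mult_ac)
      then show "complex_of_real (f1 \<eta>) = (\<integral>s. complex_of_real (w \<eta>) * cnj (\<Phi> \<eta>) * (\<phi> s * e s \<eta>) \<partial>lborel)"
        by (simp add: \<Phi>_def)
    qed
    also have "\<dots> = (\<integral>s. \<integral>\<eta>. complex_of_real (w \<eta>) * cnj (\<Phi> \<eta>) * (\<phi> s * e s \<eta>) \<partial>lborel \<partial>lborel)"
    proof (rule lborel_pair.Fubini_integral[where f="\<lambda>s \<eta>. complex_of_real (w \<eta>) * cnj (\<Phi> \<eta>) * (\<phi> s * e s \<eta>)"])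
      show "integrable (lborel \<Otimes>\<^sub>M lborel) (\<lambda>(s, \<eta>). complex_of_real (w \<eta>) * cnj (\<Phi> \<eta>) * (\<phi> s * e s \<eta>))"
      proof (rule prod_integrable[where f="\<lambda>t. cmod (\<phi> t)" and g="\<lambda>\<eta>. w \<eta> * N1"])
        show "integrable lborel (\<lambda>t. cmod (\<phi> t))" using \<phi>i by simp
        show "integrable lborel (\<lambda>\<eta>. w \<eta> * N1)" using wi by simp
        show "(\<lambda>(s, \<eta>). complex_of_real (w \<eta>) * cnj (\<Phi> \<eta>) * (\<phi> s * e s \<eta>)) \<in> borel_measurable (lborel \<Otimes>\<^sub>M lborel)"
          by measurable
        fix s \<eta> :: real
        have "w \<eta> * cmod (\<Phi> \<eta>) * cmod (\<phi> s) \<le> w \<eta> * N1 * cmod (\<phi> s)"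
          using \<Phi>b[of \<eta>] w0[of \<eta>] by (intro mult_right_mono mult_left_mono) auto
        moreover have "0 \<le> N1" unfolding N1_def by simp
        ultimately show "norm (case (s, \<eta>) of (s, \<eta>) \<Rightarrow> complex_of_real (w \<eta>) * cnj (\<Phi> \<eta>) * (\<phi> s * e s \<eta>)) \<le> norm (cmod (\<phi> s)) * norm (w \<eta> * N1)"
          using w0[of \<eta>] by (simp add: norm_mult cmod_e mult_ac abs_mult)
      qed
    qed
    also have "\<dots> = (\<integral>s. \<phi> s * (\<integral>t. cnj (\<phi> t) * complex_of_real (G (t - s)) \<partial>lborel) \<partial>lborel)"
    proof (intro Bochner_Integration.integral_cong refl)
      fix s
      have "(\<lambda>\<eta>. complex_of_real (w \<eta>) * cnj (\<Phi> \<eta>) * (\<phi> s * e s \<eta>)) = (\<lambda>\<eta>. \<phi> s * (complex_of_real (w \<eta>) * cnj (\<Phi> \<eta>) * e s \<eta>))"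
        by (auto simp: mult_ac)
      then show "(\<integral>\<eta>. complex_of_real (w \<eta>) * cnj (\<Phi> \<eta>) * (\<phi> s * e s \<eta>) \<partial>lborel) = \<phi> s * (\<integral>t. cnj (\<phi> t) * complex_of_real (G (t - s)) \<partial>lborel)"
        using J[of s] by simp
    qed
    finally show ?thesis .
  qed
  define K where "K = (\<lambda>s. \<integral>t. cnj (\<phi> t) * complex_of_real (G (t - s)) \<partial>lborel)"
  define a where "a = (\<lambda>s. cmod (\<phi> s))"
  have am[measurable]: "a \<in> borel_measurable borel" unfolding a_def by measurable
  have Kb: "ennreal (cmod (K s)) \<le> (\<integral>\<^sup>+t. ennreal (a t * G (t - s)) \<partial>lborel)" for s
  proof -
    have "ennreal (cmod (K s)) \<le> (\<integral>\<^sup>+t. ennreal (norm (cnj (\<phi> t) * complex_of_real (G (t - s)))) \<partial>lborel)"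
      unfolding K_def by (rule norm_bound_enn)
    also have "\<dots> = (\<integral>\<^sup>+t. ennreal (a t * G (t - s)) \<partial>lborel)"
      by (intro nn_integral_cong) (simp add: a_def norm_mult G0 abs_of_nonneg)
    finally show ?thesis .
  qed
  have "ennreal (\<integral>\<eta>. f1 \<eta> \<partial>lborel) = ennreal (cmod (complex_of_real (\<integral>\<eta>. f1 \<eta> \<partial>lborel)))"
    using I0 by simp
  also have "\<dots> = ennreal (cmod (\<integral>s. \<phi> s * K s \<partial>lborel))" unfolding main K_def ..
  also have "\<dots> \<le> (\<integral>\<^sup>+s. ennreal (cmod (\<phi> s * K s)) \<partial>lborel)" by (rule norm_bound_enn)
  also have "\<dots> \<le> (\<integral>\<^sup>+s. ennreal (a s) * (\<integral>\<^sup>+t. ennreal (a t * G (t - s)) \<partial>lborel) \<partial>lborel)"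
  proof (intro nn_integral_mono)
    fix s
    have "ennreal (cmod (\<phi> s * K s)) = ennreal (a s) * ennreal (cmod (K s))"
      by (simp add: a_def norm_mult ennreal_mult)
    also have "\<dots> \<le> ennreal (a s) * (\<integral>\<^sup>+t. ennreal (a t * G (t - s)) \<partial>lborel)"
      by (intro mult_left_mono Kb) simp
    finally show "ennreal (cmod (\<phi> s * K s)) \<le> \<dots>" .
  qed
  also have "\<dots> = (\<integral>\<^sup>+s. \<integral>\<^sup>+t. ennreal (a s * a t * G (t - s)) \<partial>lborel \<partial>lborel)"
  proof (intro nn_integral_cong)
    fix s
    show "ennreal (a s) * (\<integral>\<^sup>+t. ennreal (a t * G (t - s)) \<partial>lborel) = (\<integral>\<^sup>+t. ennreal (a s * a t * G (t - s)) \<partial>lborel)"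
      by (subst nn_integral_cmult[symmetric]) (auto simp: a_def G0 ennreal_mult[symmetric] mult.assoc intro!: nn_integral_cong)
  qed
  also have "\<dots> \<le> (\<integral>\<^sup>+s. \<integral>\<^sup>+t. ennreal ((a s)\<^sup>2/2 * G (t - s)) + ennreal ((a t)\<^sup>2/2 * G (t - s)) \<partial>lborel \<partial>lborel)"
  proof (intro nn_integral_mono)
    fix s t
    show "ennreal (a s * a t * G (t - s)) \<le> ennreal ((a s)\<^sup>2/2 * G (t - s)) + ennreal ((a t)\<^sup>2/2 * G (t - s))"
    proof -
      have "ennreal (a s * a t * G (t - s)) \<le> ennreal ((a s)\<^sup>2/2 * G (t - s) + (a t)\<^sup>2/2 * G (t - s))"
        by (rule ennreal_leI) (rule amgm_G[OF G0[of "t - s"]])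
      also have "\<dots> = ennreal ((a s)\<^sup>2/2 * G (t - s)) + ennreal ((a t)\<^sup>2/2 * G (t - s))"
        by (rule ennreal_plus) (simp_all add: G0)
      finally show ?thesis .
    qed
  qed
  also have "\<dots> = (\<integral>\<^sup>+s. \<integral>\<^sup>+t. ennreal ((a s)\<^sup>2/2 * G (t - s)) \<partial>lborel \<partial>lborel)
      + (\<integral>\<^sup>+s. \<integral>\<^sup>+t. ennreal ((a t)\<^sup>2/2 * G (t - s)) \<partial>lborel \<partial>lborel)"
    by (simp add: nn_integral_add)
  also have "(\<integral>\<^sup>+s. \<integral>\<^sup>+t. ennreal ((a s)\<^sup>2/2 * G (t - s)) \<partial>lborel \<partial>lborel) = ennreal pi * A"
  proof -
    have "(\<integral>\<^sup>+s. \<integral>\<^sup>+t. ennreal ((a s)\<^sup>2/2 * G (t - s)) \<partial>lborel \<partial>lborel) = (\<integral>\<^sup>+s. ennreal pi * ennreal ((a s)\<^sup>2) \<partial>lborel)"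
    proof (intro nn_integral_cong)
      fix s
      have "(\<integral>\<^sup>+t. ennreal ((a s)\<^sup>2/2 * G (t - s)) \<partial>lborel) = ennreal ((a s)\<^sup>2/2) * (\<integral>\<^sup>+t. ennreal (G (t - s)) \<partial>lborel)"
        by (subst nn_integral_cmult[symmetric]) (auto simp: G0 ennreal_mult[symmetric] intro!: nn_integral_cong)
      also have "\<dots> = ennreal pi * ennreal ((a s)\<^sup>2)" unfolding Gt1
        by (simp add: ennreal_mult[symmetric])
      finally show "(\<integral>\<^sup>+t. ennreal ((a s)\<^sup>2/2 * G (t - s)) \<partial>lborel) = ennreal pi * ennreal ((a s)\<^sup>2)" .
    qed
    also have "\<dots> = ennreal pi * A" unfolding A_def a_def by (simp add: nn_integral_cmult)
    finally show ?thesis .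
  qed
  also have "(\<integral>\<^sup>+s. \<integral>\<^sup>+t. ennreal ((a t)\<^sup>2/2 * G (t - s)) \<partial>lborel \<partial>lborel)
      = (\<integral>\<^sup>+t. \<integral>\<^sup>+s. ennreal ((a t)\<^sup>2/2 * G (t - s)) \<partial>lborel \<partial>lborel)"
    by (rule lborel_pair.Fubini') measurable
  also have "\<dots> = ennreal pi * A"
  proof -
    have "(\<integral>\<^sup>+t. \<integral>\<^sup>+s. ennreal ((a t)\<^sup>2/2 * G (t - s)) \<partial>lborel \<partial>lborel) = (\<integral>\<^sup>+t. ennreal pi * ennreal ((a t)\<^sup>2) \<partial>lborel)"
    proof (intro nn_integral_cong)
      fix t
      have "(\<integral>\<^sup>+s. ennreal ((a t)\<^sup>2/2 * G (t - s)) \<partial>lborel) = ennreal ((a t)\<^sup>2/2) * (\<integral>\<^sup>+s. ennreal (G (t - s)) \<partial>lborel)"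
        by (subst nn_integral_cmult[symmetric]) (auto simp: G0 ennreal_mult[symmetric] intro!: nn_integral_cong)
      also have "\<dots> = ennreal pi * ennreal ((a t)\<^sup>2)" unfolding Gt2
        by (simp add: ennreal_mult[symmetric])
      finally show "(\<integral>\<^sup>+s. ennreal ((a t)\<^sup>2/2 * G (t - s)) \<partial>lborel) = ennreal pi * ennreal ((a t)\<^sup>2)" .
    qed
    also have "\<dots> = ennreal pi * A" unfolding A_def a_def by (simp add: nn_integral_cmult)
    finally show ?thesis .
  qed
  also have "ennreal pi * A + ennreal pi * A = ennreal (2*pi) * A"
    by (simp add: distrib_right[symmetric] ennreal_plus[symmetric] del: ennreal_plus)
  finally have "ennreal (\<integral>\<eta>. f1 \<eta> \<partial>lborel) \<le> ennreal (2*pi) * A" .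
  then show ?thesis using step1 unfolding f1_def w_def \<Phi>_def e_def A_def by simp
qed

lemma le_1_sq: "(x::real) \<le> 1 + x\<^sup>2"
proof -
  have "0 \<le> (x - 1/2)\<^sup>2" by simp
  then show ?thesis by (simp add: power2_eq_square algebra_simps)
qed

lemma plancherel:
  fixes \<phi> :: "real \<Rightarrow> complex" and L :: real
  assumes \<phi>m[measurable]: "\<phi> \<in> borel_measurable borel"
    and supp: "\<And>s. s \<notin> {-L..L} \<Longrightarrow> \<phi> s = 0"
    and fin: "(\<integral>\<^sup>+s. ennreal ((cmod (\<phi> s))\<^sup>2) \<partial>lborel) < \<infinity>"
  shows "integrable lborel \<phi>"
    and "(\<integral>\<^sup>+\<eta>. ennreal ((cmod (\<integral>s. \<phi> s * exp (-\<i> * complex_of_real (s*\<eta>)) \<partial>lborel))\<^sup>2) \<partial>lborel)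
     \<le> ennreal (2*pi) * (\<integral>\<^sup>+s. ennreal ((cmod (\<phi> s))\<^sup>2) \<partial>lborel)"
proof -
  show \<phi>i: "integrable lborel \<phi>"
  proof (rule integrableI_bounded)
    have "(\<integral>\<^sup>+s. ennreal (norm (\<phi> s)) \<partial>lborel) \<le> (\<integral>\<^sup>+s. indicator {-L..L} s + ennreal ((cmod (\<phi> s))\<^sup>2) \<partial>lborel)"
    proof (intro nn_integral_mono)
      fix s
      show "ennreal (norm (\<phi> s)) \<le> indicator {-L..L} s + ennreal ((cmod (\<phi> s))\<^sup>2)"
      proof (cases "s \<in> {-L..L}")
        case True
        have "cmod (\<phi> s) \<le> 1 + (cmod (\<phi> s))\<^sup>2"
          by (rule le_1_sq)
        then have "ennreal (cmod (\<phi> s)) \<le> ennreal (1 + (cmod (\<phi> s))\<^sup>2)" by (rule ennreal_leI)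
        then show ?thesis using True by (simp add: ennreal_plus)
      next
        case False then show ?thesis using supp[of s] by simp
      qed
    qed
    also have "\<dots> = emeasure lborel {-L..L} + (\<integral>\<^sup>+s. ennreal ((cmod (\<phi> s))\<^sup>2) \<partial>lborel)"
      by (subst nn_integral_add) auto
    also have "\<dots> < \<infinity>" using fin by (simp add: emeasure_lborel_Icc_eq)
    finally show "(\<integral>\<^sup>+s. ennreal (norm (\<phi> s)) \<partial>lborel) < \<infinity>" .
  qed simp
  define \<Phi> where "\<Phi> = (\<lambda>\<eta>. \<integral>s. \<phi> s * exp (-\<i> * complex_of_real (s*\<eta>)) \<partial>lborel)"
  have \<Phi>m[measurable]: "\<Phi> \<in> borel_measurable borel" unfolding \<Phi>_def by measurable
  define u where "u = (\<lambda>n \<eta>. ennreal (exp (-(\<eta>/real (Suc n))\<^sup>2/2) * (cmod (\<Phi> \<eta>))\<^sup>2))"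
  have um: "u n \<in> borel_measurable lborel" for n unfolding u_def by measurable
  have lim: "(\<lambda>n. u n \<eta>) \<longlonglongrightarrow> ennreal ((cmod (\<Phi> \<eta>))\<^sup>2)" for \<eta>
  proof -
    have "(\<lambda>n. \<eta> * inverse (real (Suc n))) \<longlonglongrightarrow> \<eta> * 0"
      by (intro tendsto_intros LIMSEQ_inverse_real_of_nat)
    then have "(\<lambda>n. \<eta> / real (Suc n)) \<longlonglongrightarrow> 0" by (simp add: divide_inverse)
    then have "(\<lambda>n. exp (-(\<eta>/real (Suc n))\<^sup>2/2) * (cmod (\<Phi> \<eta>))\<^sup>2) \<longlonglongrightarrow> exp (-(0::real)\<^sup>2/2) * (cmod (\<Phi> \<eta>))\<^sup>2"
      by (intro tendsto_intros) auto
    then show ?thesis unfolding u_def by (intro tendsto_ennrealI) simp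
  qed
  have "(\<integral>\<^sup>+\<eta>. ennreal ((cmod (\<Phi> \<eta>))\<^sup>2) \<partial>lborel) = (\<integral>\<^sup>+\<eta>. liminf (\<lambda>n. u n \<eta>) \<partial>lborel)"
    by (intro nn_integral_cong) (simp add: lim_imp_Liminf[OF _ lim])
  also have "\<dots> \<le> liminf (\<lambda>n. \<integral>\<^sup>+\<eta>. u n \<eta> \<partial>lborel)"
    by (rule nn_integral_liminf) (use um in simp)
  also have "\<dots> \<le> ennreal (2*pi) * (\<integral>\<^sup>+s. ennreal ((cmod (\<phi> s))\<^sup>2) \<partial>lborel)"
  proof (intro Liminf_le always_eventually allI)
    fix n
    show "(\<integral>\<^sup>+\<eta>. u n \<eta> \<partial>lborel) \<le> ennreal (2*pi) * (\<integral>\<^sup>+s. ennreal ((cmod (\<phi> s))\<^sup>2) \<partial>lborel)"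
      unfolding u_def \<Phi>_def by (rule plancherel_w) (use \<phi>i in auto)
  qed simp
  finally show "(\<integral>\<^sup>+\<eta>. ennreal ((cmod (\<integral>s. \<phi> s * exp (-\<i> * complex_of_real (s*\<eta>)) \<partial>lborel))\<^sup>2) \<partial>lborel)
     \<le> ennreal (2*pi) * (\<integral>\<^sup>+s. ennreal ((cmod (\<phi> s))\<^sup>2) \<partial>lborel)" unfolding \<Phi>_def .
qed

lemma tail_lim:
  fixes F :: "real \<Rightarrow> real"
  assumes Fi: "integrable lborel F" and F0: "\<And>s. 0 \<le> F s"
  shows "((\<lambda>\<rho>. \<integral>\<^sup>+s. ennreal (indicator (-{-\<rho>..\<rho>}) s * F s) \<partial>lborel) \<longlongrightarrow> 0) at_top"
proof -
  have [measurable]: "F \<in> borel_measurable borel" using Fi by auto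
  have i: "integrable lborel (\<lambda>s. indicator (-{-\<rho>..\<rho>}) s * F s)" for \<rho>
    using integrable_real_mult_indicator[of "-{-\<rho>..\<rho>}" lborel F] Fi by (simp add: mult_ac)
  have eq: "(\<integral>\<^sup>+s. ennreal (indicator (-{-\<rho>..\<rho>}) s * F s) \<partial>lborel) = ennreal (\<integral>s. indicator (-{-\<rho>..\<rho>}) s * F s \<partial>lborel)" for \<rho>
    by (rule nn_integral_eq_integral[OF i]) (simp add: F0)
  have "((\<lambda>\<rho>. \<integral>s. indicator (-{-\<rho>..\<rho>}) s * F s \<partial>lborel) \<longlongrightarrow> (\<integral>s. 0 \<partial>(lborel::real measure))) at_top"
  proof (rule Bochner_Integration.integral_dominated_convergence_at_top[where w=F and s="\<lambda>\<rho> s. indicator (-{-\<rho>..\<rho>}) s * F s" and f="\<lambda>_. 0" and M=lborel])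
    show "AE x in lborel. ((\<lambda>\<rho>. indicator (-{-\<rho>..\<rho>}) x * F x) \<longlongrightarrow> 0) at_top"
    proof (intro AE_I2)
      fix x :: real
      have "eventually (\<lambda>\<rho>. indicator (-{-\<rho>..\<rho>}) x * F x = 0) at_top"
        using eventually_ge_at_top[of "\<bar>x\<bar>"] by eventually_elim (auto simp: indicator_def)
      then show "((\<lambda>\<rho>. indicator (-{-\<rho>..\<rho>}) x * F x) \<longlongrightarrow> 0) at_top"
        by (rule tendsto_eventually)
    qed
    show "\<forall>\<^sub>F i in at_top. AE x in lborel. norm (indicator (-{-i..i}) x * F x) \<le> F x"
      by (intro always_eventually allI AE_I2) (auto simp: indicator_def F0)
  qed (use Fi in auto)
  then have "((\<lambda>\<rho>. ennreal (\<integral>s. indicator (-{-\<rho>..\<rho>}) s * F s \<partial>lborel)) \<longlongrightarrow> ennreal 0) at_top"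
    by (intro tendsto_ennrealI) simp
  then show ?thesis unfolding eq by simp
qed

lemma trunc_W:
  assumes "0 \<le> \<rho>"
  shows "trunc_fourier h \<rho> \<eta> = (\<integral>s. indicator {-\<rho>..\<rho>} s *\<^sub>R (h s * exp (- \<i> * complex_of_real (s*\<eta>))) \<partial>lborel)"
  unfolding trunc_fourier_def using assms
  by (simp add: interval_integral_Icc set_lebesgue_integral_def)

lemma ind_L2:
  fixes h :: "real \<Rightarrow> complex"
  assumes hL: "L2_fun h"
  shows "integrable lborel (\<lambda>s. indicator {a..b} s *\<^sub>R h s)"
    and "(\<integral>\<^sup>+s. ennreal ((cmod (indicator {a..b} s *\<^sub>R h s))\<^sup>2) \<partial>lborel) < \<infinity>"
proof -
  have [measurable]: "h \<in> borel_measurable borel" using hL unfolding L2_fun_def by auto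
  have hi: "integrable lborel (\<lambda>t. (cmod (h t))\<^sup>2)" using hL unfolding L2_fun_def by auto
  have "(\<integral>\<^sup>+s. ennreal ((cmod (indicator {a..b} s *\<^sub>R h s))\<^sup>2) \<partial>lborel) \<le> (\<integral>\<^sup>+s. ennreal ((cmod (h s))\<^sup>2) \<partial>lborel)"
    by (intro nn_integral_mono) (auto simp: indicator_def)
  also have "\<dots> < \<infinity>" using hi by (simp add: integrable_iff_bounded)
  finally show fin: "(\<integral>\<^sup>+s. ennreal ((cmod (indicator {a..b} s *\<^sub>R h s))\<^sup>2) \<partial>lborel) < \<infinity>" .
  show "integrable lborel (\<lambda>s. indicator {a..b} s *\<^sub>R h s)"
    by (rule plancherel(1)[where L="max \<bar>a\<bar> \<bar>b\<bar>"]) (use fin in \<open>auto simp: indicator_def\<close>)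
qed

lemma ind_e_int:
  fixes h :: "real \<Rightarrow> complex"
  assumes hL: "L2_fun h"
  shows "integrable lborel (\<lambda>s. indicator {a..b} s *\<^sub>R (h s * exp (- \<i> * complex_of_real (s*\<eta>))))"
proof -
  have [measurable]: "h \<in> borel_measurable borel" using hL unfolding L2_fun_def by auto
  show ?thesis
    by (rule Bochner_Integration.integrable_bound[OF ind_L2(1)[OF hL, of a b]]) (auto simp: norm_mult indicator_def)
qed

lemma window_lim:
  fixes h hh :: "real \<Rightarrow> complex" and kk :: real
  assumes fh: "fourier_L2 h hh"
  shows "((\<lambda>r. \<integral>\<^sup>+\<eta>. ennreal ((cmod (hh \<eta> - (\<integral>s. indicator {kk - r..kk + r} s *\<^sub>R (h s * exp (- \<i> * complex_of_real (s*\<eta>))) \<partial>lborel)))\<^sup>2) \<partial>lborel) \<longlongrightarrow> 0) at_top"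
proof -
  define W where "W = (\<lambda>a b \<eta>. \<integral>s. indicator {a..b} s *\<^sub>R (h s * exp (- \<i> * complex_of_real (s*\<eta>))) \<partial>lborel)"
  have hL: "L2_fun h" and hhL: "L2_fun hh" using fh unfolding fourier_L2_def by auto
  have [measurable]: "h \<in> borel_measurable borel" "hh \<in> borel_measurable borel" using hL hhL unfolding L2_fun_def by auto
  have hi: "integrable lborel (\<lambda>t. (cmod (h t))\<^sup>2)" using hL unfolding L2_fun_def by auto
  define a where "a = (\<lambda>R. \<integral>\<^sup>+ \<xi>. ennreal ((cmod (hh \<xi> - trunc_fourier h R \<xi>))\<^sup>2) \<partial>lborel)"
  have alim: "(a \<longlongrightarrow> 0) at_top" using fh unfolding fourier_L2_def a_def by auto
  define tl where "tl = (\<lambda>\<rho>. \<integral>\<^sup>+s. ennreal (indicator (-{-\<rho>..\<rho>}) s * (cmod (h s))\<^sup>2) \<partial>lborel)"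
  have tlim: "(tl \<longlongrightarrow> 0) at_top" unfolding tl_def by (rule tail_lim[OF hi]) simp
  have Wm[measurable]: "W a b \<in> borel_measurable borel" for a b unfolding W_def by measurable
  define B where "B = (\<lambda>r. 2 * a (r - \<bar>kk\<bar>) + 2 * (ennreal (2*pi) * tl (r - \<bar>kk\<bar>)))"
  have shift: "filterlim (\<lambda>r. r - \<bar>kk\<bar>) at_top at_top"
    using filterlim_tendsto_add_at_top[OF tendsto_const[of "-\<bar>kk\<bar>"] filterlim_ident] by simp
  have Blim: "(B \<longlongrightarrow> 0) at_top"
  proof -
    have a2: "((\<lambda>r. a (r - \<bar>kk\<bar>)) \<longlongrightarrow> 0) at_top" by (rule filterlim_compose[OF alim shift])
    have t2: "((\<lambda>r. tl (r - \<bar>kk\<bar>)) \<longlongrightarrow> 0) at_top" by (rule filterlim_compose[OF tlim shift])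
    have "(B \<longlongrightarrow> 2 * 0 + 2 * (ennreal (2*pi) * 0)) at_top"
      unfolding B_def by (intro tendsto_add tendsto_mult_ennreal tendsto_const a2 t2) auto
    then show ?thesis by simp
  qed
  have bound: "(\<integral>\<^sup>+\<eta>. ennreal ((cmod (hh \<eta> - W (kk - r) (kk + r) \<eta>))\<^sup>2) \<partial>lborel) \<le> B r"
    if r: "\<bar>kk\<bar> \<le> r" for r
  proof -
    define \<rho> where "\<rho> = r - \<bar>kk\<bar>"
    have \<rho>0: "0 \<le> \<rho>" using r unfolding \<rho>_def by simp
    define \<phi> where "\<phi> = (\<lambda>s. (indicator {kk - r..kk + r} s - indicator {-\<rho>..\<rho>} s) *\<^sub>R h s)"
    have \<phi>m[measurable]: "\<phi> \<in> borel_measurable borel" unfolding \<phi>_def by measurable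
    have sub: "s \<in> {-\<rho>..\<rho>} \<Longrightarrow> s \<in> {kk - r..kk + r}" for s unfolding \<rho>_def by auto
    have \<phi>sq: "(cmod (\<phi> s))\<^sup>2 \<le> indicator (-{-\<rho>..\<rho>}) s * (cmod (h s))\<^sup>2" for s
      using sub[of s] unfolding \<phi>_def by (auto simp: indicator_def)
    have \<phi>supp: "s \<notin> {-(r + \<bar>kk\<bar>)..r + \<bar>kk\<bar>} \<Longrightarrow> \<phi> s = 0" for s
      unfolding \<phi>_def \<rho>_def by (auto simp: indicator_def)
    have \<phi>L2: "(\<integral>\<^sup>+s. ennreal ((cmod (\<phi> s))\<^sup>2) \<partial>lborel) \<le> tl \<rho>"
      unfolding tl_def by (intro nn_integral_mono ennreal_leI \<phi>sq)
    have tlfin: "tl \<rho> < \<infinity>"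
    proof -
      have "tl \<rho> \<le> (\<integral>\<^sup>+s. ennreal ((cmod (h s))\<^sup>2) \<partial>lborel)"
        unfolding tl_def by (intro nn_integral_mono) (auto simp: indicator_def)
      also have "\<dots> < \<infinity>" using hi by (simp add: integrable_iff_bounded)
      finally show ?thesis .
    qed
    have \<phi>fin: "(\<integral>\<^sup>+s. ennreal ((cmod (\<phi> s))\<^sup>2) \<partial>lborel) < \<infinity>" using \<phi>L2 tlfin by (rule le_less_trans)
    have diff: "W (kk - r) (kk + r) \<eta> - W (-\<rho>) \<rho> \<eta> = (\<integral>s. \<phi> s * exp (- \<i> * complex_of_real (s*\<eta>)) \<partial>lborel)" for \<eta>
    proof -
      have "W (kk - r) (kk + r) \<eta> - W (-\<rho>) \<rho> \<eta> =
        (\<integral>s. indicator {kk - r..kk + r} s *\<^sub>R (h s * exp (- \<i> * complex_of_real (s*\<eta>))) - indicator {-\<rho>..\<rho>} s *\<^sub>R (h s * exp (- \<i> * complex_of_real (s*\<eta>))) \<partial>lborel)"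
        unfolding W_def by (rule Bochner_Integration.integral_diff[symmetric]) (rule ind_e_int[OF hL])+
      also have "\<dots> = (\<integral>s. \<phi> s * exp (- \<i> * complex_of_real (s*\<eta>)) \<partial>lborel)"
        unfolding \<phi>_def by (intro Bochner_Integration.integral_cong refl) (simp add: algebra_simps scaleR_conv_of_real)
      finally show ?thesis .
    qed
    have "(\<integral>\<^sup>+\<eta>. ennreal ((cmod (hh \<eta> - W (kk - r) (kk + r) \<eta>))\<^sup>2) \<partial>lborel)
       \<le> (\<integral>\<^sup>+\<eta>. 2 * ennreal ((cmod (hh \<eta> - trunc_fourier h \<rho> \<eta>))\<^sup>2) + 2 * ennreal ((cmod (\<integral>s. \<phi> s * exp (- \<i> * complex_of_real (s*\<eta>)) \<partial>lborel))\<^sup>2) \<partial>lborel)"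
    proof (intro nn_integral_mono)
      fix \<eta>
      have t: "trunc_fourier h \<rho> \<eta> = W (-\<rho>) \<rho> \<eta>" unfolding W_def by (rule trunc_W[OF \<rho>0])
      have "(cmod (hh \<eta> - W (kk - r) (kk + r) \<eta>))\<^sup>2 \<le> 2 * (cmod (hh \<eta> - W (-\<rho>) \<rho> \<eta>))\<^sup>2 + 2 * (cmod (W (kk - r) (kk + r) \<eta> - W (-\<rho>) \<rho> \<eta>))\<^sup>2"
        by (rule sq_tri)
      then have "ennreal ((cmod (hh \<eta> - W (kk - r) (kk + r) \<eta>))\<^sup>2) \<le> ennreal (2 * (cmod (hh \<eta> - trunc_fourier h \<rho> \<eta>))\<^sup>2 + 2 * (cmod (\<integral>s. \<phi> s * exp (- \<i> * complex_of_real (s*\<eta>)) \<partial>lborel))\<^sup>2)"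
        unfolding t diff by (rule ennreal_leI)
      also have "\<dots> = 2 * ennreal ((cmod (hh \<eta> - trunc_fourier h \<rho> \<eta>))\<^sup>2) + 2 * ennreal ((cmod (\<integral>s. \<phi> s * exp (- \<i> * complex_of_real (s*\<eta>)) \<partial>lborel))\<^sup>2)"
        by (simp add: ennreal_plus ennreal_mult del: ennreal_plus_if)
      finally show "ennreal ((cmod (hh \<eta> - W (kk - r) (kk + r) \<eta>))\<^sup>2) \<le> \<dots>" .
    qed
    also have "\<dots> = 2 * a \<rho> + 2 * (\<integral>\<^sup>+\<eta>. ennreal ((cmod (\<integral>s. \<phi> s * exp (- \<i> * complex_of_real (s*\<eta>)) \<partial>lborel))\<^sup>2) \<partial>lborel)"
      unfolding a_def by (simp add: nn_integral_add nn_integral_cmult)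
    also have "\<dots> \<le> 2 * a \<rho> + 2 * (ennreal (2*pi) * tl \<rho>)"
    proof -
      have "(\<integral>\<^sup>+\<eta>. ennreal ((cmod (\<integral>s. \<phi> s * exp (- \<i> * complex_of_real (s*\<eta>)) \<partial>lborel))\<^sup>2) \<partial>lborel)
          \<le> ennreal (2*pi) * (\<integral>\<^sup>+s. ennreal ((cmod (\<phi> s))\<^sup>2) \<partial>lborel)"
        by (rule plancherel(2)[OF \<phi>m \<phi>supp \<phi>fin])
      also have "\<dots> \<le> ennreal (2*pi) * tl \<rho>" by (intro mult_left_mono \<phi>L2) simp
      finally show ?thesis by (intro add_left_mono mult_left_mono) simp_all
    qed
    finally show ?thesis unfolding B_def \<rho>_def .
  qed
  show ?thesis
  proof (rule tendsto_sandwich[OF _ _ tendsto_const Blim])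
    show "\<forall>\<^sub>F r in at_top. 0 \<le> (\<integral>\<^sup>+\<eta>. ennreal ((cmod (hh \<eta> - (\<integral>s. indicator {kk - r..kk + r} s *\<^sub>R (h s * exp (- \<i> * complex_of_real (s*\<eta>))) \<partial>lborel)))\<^sup>2) \<partial>lborel)"
      by simp
    show "\<forall>\<^sub>F r in at_top. (\<integral>\<^sup>+\<eta>. ennreal ((cmod (hh \<eta> - (\<integral>s. indicator {kk - r..kk + r} s *\<^sub>R (h s * exp (- \<i> * complex_of_real (s*\<eta>))) \<partial>lborel)))\<^sup>2) \<partial>lborel) \<le> B r"
      using eventually_ge_at_top[of "\<bar>kk\<bar>"] by eventually_elim (use bound in \<open>simp add: W_def\<close>)
  qed
qed

lemma sq_powr: "(x powr a)\<^sup>2 = x powr (2*a)" for x a :: real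
  by (simp add: power2_eq_square powr_add[symmetric])

lemma hat_pt:
  fixes hh :: "real \<Rightarrow> complex" and C \<alpha> E :: real and M :: nat and \<eta> :: real
  assumes bnd: "cmod (hh \<eta>) \<le> C * \<bar>\<eta>\<bar> ^ M * (1 + \<bar>\<eta>\<bar>) powr (- \<alpha> - real M)"
    and \<alpha>: "\<alpha> > 0"
  shows "(cmod (hh \<eta>))\<^sup>2 * \<bar>\<eta>\<bar> powr E \<le> C\<^sup>2 * (indicator {-1..1} \<eta> * \<bar>\<eta>\<bar> powr (2 * real M + E)
      + indicator (-{-1<..<1}) \<eta> * \<bar>\<eta>\<bar> powr (E - 2*\<alpha>))"
proof (cases "\<eta> = 0")
  case True then show ?thesis by (simp add: indicator_def)
next
  case False
  then have p: "\<bar>\<eta>\<bar> > 0" by simp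
  have c0: "0 \<le> cmod (hh \<eta>)" by simp
  have pw: "\<bar>\<eta>\<bar> ^ M = \<bar>\<eta>\<bar> powr real M" using p by (simp add: powr_realpow)
  have sq: "(cmod (hh \<eta>))\<^sup>2 \<le> (C * \<bar>\<eta>\<bar> ^ M * (1 + \<bar>\<eta>\<bar>) powr (- \<alpha> - real M))\<^sup>2"
    using bnd c0 by (intro power_mono) auto
  also have "(C * \<bar>\<eta>\<bar> ^ M * (1 + \<bar>\<eta>\<bar>) powr (- \<alpha> - real M))\<^sup>2 = C\<^sup>2 * \<bar>\<eta>\<bar> powr (2 * real M) * (1 + \<bar>\<eta>\<bar>) powr (- 2*\<alpha> - 2*real M)"
    unfolding pw power_mult_distrib sq_powr by (simp add: algebra_simps)
  finally have sq2: "(cmod (hh \<eta>))\<^sup>2 \<le> C\<^sup>2 * \<bar>\<eta>\<bar> powr (2 * real M) * (1 + \<bar>\<eta>\<bar>) powr (- 2*\<alpha> - 2*real M)" .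
  have E0: "0 \<le> \<bar>\<eta>\<bar> powr E" by simp
  show ?thesis
  proof (cases "\<bar>\<eta>\<bar> \<le> 1")
    case True
    have "(1 + \<bar>\<eta>\<bar>) powr (- 2*\<alpha> - 2*real M) \<le> 1"
      using powr_mono[of "- 2*\<alpha> - 2*real M" 0 "1 + \<bar>\<eta>\<bar>"] \<alpha> by (simp split: if_splits)
    then have "(cmod (hh \<eta>))\<^sup>2 \<le> C\<^sup>2 * \<bar>\<eta>\<bar> powr (2 * real M)"
    proof -
      have "C\<^sup>2 * \<bar>\<eta>\<bar> powr (2 * real M) * (1 + \<bar>\<eta>\<bar>) powr (- 2*\<alpha> - 2*real M) \<le> C\<^sup>2 * \<bar>\<eta>\<bar> powr (2 * real M) * 1"
        by (rule mult_left_mono[OF \<open>(1 + \<bar>\<eta>\<bar>) powr (- 2*\<alpha> - 2*real M) \<le> 1\<close>]) simp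
      then show ?thesis using sq2 by simp
    qed
    then have "(cmod (hh \<eta>))\<^sup>2 * \<bar>\<eta>\<bar> powr E \<le> C\<^sup>2 * \<bar>\<eta>\<bar> powr (2 * real M) * \<bar>\<eta>\<bar> powr E"
      using E0 by (rule mult_right_mono)
    also have "\<dots> = C\<^sup>2 * \<bar>\<eta>\<bar> powr (2 * real M + E)" by (simp add: powr_add mult.assoc)
    also have "\<dots> \<le> C\<^sup>2 * (indicator {-1..1} \<eta> * \<bar>\<eta>\<bar> powr (2 * real M + E)
      + indicator (-{-1<..<1}) \<eta> * \<bar>\<eta>\<bar> powr (E - 2*\<alpha>))"
      using True by (intro mult_left_mono) (auto simp: indicator_def)
    finally show ?thesis .
  next
    case False
    have "(1 + \<bar>\<eta>\<bar>) powr (- 2*\<alpha> - 2*real M) \<le> \<bar>\<eta>\<bar> powr (- 2*\<alpha> - 2*real M)"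
      using \<alpha> p by (intro powr_mono2') auto
    then have "(cmod (hh \<eta>))\<^sup>2 \<le> C\<^sup>2 * \<bar>\<eta>\<bar> powr (2 * real M) * \<bar>\<eta>\<bar> powr (- 2*\<alpha> - 2*real M)"
    proof -
      have "C\<^sup>2 * \<bar>\<eta>\<bar> powr (2 * real M) * (1 + \<bar>\<eta>\<bar>) powr (- 2*\<alpha> - 2*real M) \<le> C\<^sup>2 * \<bar>\<eta>\<bar> powr (2 * real M) * \<bar>\<eta>\<bar> powr (- 2*\<alpha> - 2*real M)"
        by (rule mult_left_mono[OF \<open>(1 + \<bar>\<eta>\<bar>) powr (- 2*\<alpha> - 2*real M) \<le> \<bar>\<eta>\<bar> powr (- 2*\<alpha> - 2*real M)\<close>]) simp
      then show ?thesis using sq2 by simp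
    qed
    also have "\<dots> = C\<^sup>2 * \<bar>\<eta>\<bar> powr (- 2*\<alpha>)" by (simp add: powr_add[symmetric] mult.assoc)
    finally have B1: "(cmod (hh \<eta>))\<^sup>2 \<le> C\<^sup>2 * \<bar>\<eta>\<bar> powr (- 2*\<alpha>)" .
    have "(cmod (hh \<eta>))\<^sup>2 * \<bar>\<eta>\<bar> powr E \<le> C\<^sup>2 * \<bar>\<eta>\<bar> powr (- 2*\<alpha>) * \<bar>\<eta>\<bar> powr E"
      using B1 E0 by (rule mult_right_mono)
    also have "\<dots> = C\<^sup>2 * \<bar>\<eta>\<bar> powr (E - 2*\<alpha>)" by (simp add: powr_add[symmetric] mult.assoc)
    also have "\<dots> \<le> C\<^sup>2 * (indicator {-1..1} \<eta> * \<bar>\<eta>\<bar> powr (2 * real M + E)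
      + indicator (-{-1<..<1}) \<eta> * \<bar>\<eta>\<bar> powr (E - 2*\<alpha>))"
      using False by (intro mult_left_mono) (auto simp: indicator_def)
    finally show ?thesis .
  qed
qed

lemma hat_fin:
  fixes hh :: "real \<Rightarrow> complex" and C \<alpha> E :: real and M :: nat
  assumes bnd: "\<And>x. cmod (hh x) \<le> C * \<bar>x\<bar> ^ M * (1 + \<bar>x\<bar>) powr (- \<alpha> - real M)"
    and \<alpha>: "\<alpha> > 0" and E1: "2 * real M + E > -1" and E2: "E - 2*\<alpha> < -1"
  shows "(\<integral>\<^sup>+\<eta>. ennreal ((cmod (hh \<eta>))\<^sup>2 * \<bar>\<eta>\<bar> powr E) \<partial>lborel) < \<infinity>"
proof -
  have "(\<integral>\<^sup>+\<eta>. ennreal ((cmod (hh \<eta>))\<^sup>2 * \<bar>\<eta>\<bar> powr E) \<partial>lborel)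
     \<le> (\<integral>\<^sup>+\<eta>. ennreal (C\<^sup>2) * (indicator {-1..1} \<eta> * ennreal (\<bar>\<eta>\<bar> powr (2 * real M + E))
      + indicator (-{-1<..<1}) \<eta> * ennreal (\<bar>\<eta>\<bar> powr (E - 2*\<alpha>))) \<partial>lborel)"
  proof (intro nn_integral_mono)
    fix \<eta> :: real
    have "ennreal ((cmod (hh \<eta>))\<^sup>2 * \<bar>\<eta>\<bar> powr E) \<le> ennreal (C\<^sup>2 * (indicator {-1..1} \<eta> * \<bar>\<eta>\<bar> powr (2 * real M + E)
      + indicator (-{-1<..<1}) \<eta> * \<bar>\<eta>\<bar> powr (E - 2*\<alpha>)))"
      by (intro ennreal_leI hat_pt bnd \<alpha>)
    also have "\<dots> = ennreal (C\<^sup>2) * (indicator {-1..1} \<eta> * ennreal (\<bar>\<eta>\<bar> powr (2 * real M + E))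
      + indicator (-{-1<..<1}) \<eta> * ennreal (\<bar>\<eta>\<bar> powr (E - 2*\<alpha>)))"
      by (subst ennreal_mult) (auto simp: ennreal_plus ennreal_ind_mult indicator_def simp del: ennreal_plus_if)
    finally show "ennreal ((cmod (hh \<eta>))\<^sup>2 * \<bar>\<eta>\<bar> powr E) \<le> \<dots>" .
  qed
  also have "\<dots> = ennreal (C\<^sup>2) * ((\<integral>\<^sup>+\<eta>. indicator {-1..1} \<eta> * ennreal (\<bar>\<eta>\<bar> powr (2 * real M + E)) \<partial>lborel)
      + (\<integral>\<^sup>+\<eta>. indicator (-{-1<..<1}) \<eta> * ennreal (\<bar>\<eta>\<bar> powr (E - 2*\<alpha>)) \<partial>lborel))"
    by (simp add: nn_integral_cmult nn_integral_add)
  also have "\<dots> < \<infinity>"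
    using fin_powr_0[OF E1] fin_powr_inf[OF E2] by (simp add: ennreal_mult_less_top)
  finally show ?thesis .
qed

lemma trunc_scale:
  fixes h :: "real \<Rightarrow> complex" and \<gamma> kk R \<xi> :: real
  assumes \<gamma>: "\<gamma> > 0" and R: "R \<ge> 0"
  shows "trunc_fourier (\<lambda>t. complex_of_real (\<gamma> powr (-1/2)) * h (- t / \<gamma> + kk)) R \<xi>
    = complex_of_real (sqrt \<gamma>) * exp (- \<i> * complex_of_real (\<gamma> * kk * \<xi>)) *
      (\<integral>s. indicator {kk - R/\<gamma>..kk + R/\<gamma>} s *\<^sub>R (h s * exp (- \<i> * complex_of_real (s * (-\<gamma>*\<xi>)))) \<partial>lborel)"
proof -
  define c0 where "c0 = complex_of_real (\<gamma> powr (-1/2)) * exp (- \<i> * complex_of_real (\<gamma> * kk * \<xi>))"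
  have "trunc_fourier (\<lambda>t. complex_of_real (\<gamma> powr (-1/2)) * h (- t / \<gamma> + kk)) R \<xi>
     = (\<integral>t. indicator {-R..R} t *\<^sub>R (complex_of_real (\<gamma> powr (-1/2)) * h (- t / \<gamma> + kk) * exp (- \<i> * complex_of_real (t*\<xi>))) \<partial>lborel)"
    by (rule trunc_W[OF R])
  also have "\<dots> = \<bar>-\<gamma>\<bar> *\<^sub>R (\<integral>s. indicator {-R..R} (\<gamma>*kk + (- \<gamma>) * s) *\<^sub>R (complex_of_real (\<gamma> powr (-1/2)) * h (- (\<gamma>*kk + (- \<gamma>) * s) / \<gamma> + kk) * exp (- \<i> * complex_of_real ((\<gamma>*kk + (- \<gamma>) * s)*\<xi>))) \<partial>lborel)"
    by (rule lborel_integral_real_affine) (use \<gamma> in simp)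
  also have "(\<lambda>s. indicator {-R..R} (\<gamma>*kk + (- \<gamma>) * s) *\<^sub>R (complex_of_real (\<gamma> powr (-1/2)) * h (- (\<gamma>*kk + (- \<gamma>) * s) / \<gamma> + kk) * exp (- \<i> * complex_of_real ((\<gamma>*kk + (- \<gamma>) * s)*\<xi>))))
     = (\<lambda>s. c0 * (indicator {kk - R/\<gamma>..kk + R/\<gamma>} s *\<^sub>R (h s * exp (- \<i> * complex_of_real (s * (-\<gamma>*\<xi>))))))"
  proof
    fix s
    have i: "indicator {-R..R} (\<gamma>*kk + (- \<gamma>) * s) = (indicator {kk - R/\<gamma>..kk + R/\<gamma>} s :: real)"
    proof -
      have "(\<gamma>*kk + (- \<gamma>) * s \<in> {-R..R}) = (s \<in> {kk - R/\<gamma>..kk + R/\<gamma>})"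
        using \<gamma> by (auto simp: field_simps)
      then show ?thesis by (simp add: indicator_def)
    qed
    have a: "- (\<gamma>*kk + (- \<gamma>) * s) / \<gamma> + kk = s" using \<gamma> by (simp add: field_simps)
    have e: "exp (- \<i> * complex_of_real ((\<gamma>*kk + (- \<gamma>) * s)*\<xi>)) = exp (- \<i> * complex_of_real (\<gamma> * kk * \<xi>)) * exp (- \<i> * complex_of_real (s * (-\<gamma>*\<xi>)))"
      by (simp add: exp_add[symmetric] algebra_simps)
    show "indicator {-R..R} (\<gamma>*kk + (- \<gamma>) * s) *\<^sub>R (complex_of_real (\<gamma> powr (-1/2)) * h (- (\<gamma>*kk + (- \<gamma>) * s) / \<gamma> + kk) * exp (- \<i> * complex_of_real ((\<gamma>*kk + (- \<gamma>) * s)*\<xi>)))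
     = c0 * (indicator {kk - R/\<gamma>..kk + R/\<gamma>} s *\<^sub>R (h s * exp (- \<i> * complex_of_real (s * (-\<gamma>*\<xi>)))))"
      unfolding i a e c0_def by (simp add: scaleR_conv_of_real mult_ac)
  qed
  also have "\<bar>-\<gamma>\<bar> *\<^sub>R (\<integral>s. c0 * (indicator {kk - R/\<gamma>..kk + R/\<gamma>} s *\<^sub>R (h s * exp (- \<i> * complex_of_real (s * (-\<gamma>*\<xi>))))) \<partial>lborel)
     = complex_of_real (\<gamma> * \<gamma> powr (-1/2)) * exp (- \<i> * complex_of_real (\<gamma> * kk * \<xi>)) *
      (\<integral>s. indicator {kk - R/\<gamma>..kk + R/\<gamma>} s *\<^sub>R (h s * exp (- \<i> * complex_of_real (s * (-\<gamma>*\<xi>)))) \<partial>lborel)"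
    unfolding integral_mult_right_zero c0_def using \<gamma> by (simp add: scaleR_conv_of_real mult_ac)
  also have "\<gamma> * \<gamma> powr (-1/2) = sqrt \<gamma>"
  proof -
    have "\<gamma> * \<gamma> powr (-1/2) = \<gamma> powr 1 * \<gamma> powr (-1/2)" using \<gamma> by simp
    also have "\<dots> = \<gamma> powr (1/2)" by (subst powr_add[symmetric]) simp
    also have "\<dots> = sqrt \<gamma>" using \<gamma> by (simp add: powr_half_sqrt)
    finally show ?thesis .
  qed
  finally show ?thesis .
qed

lemma part2_one:
  fixes h hh :: "real \<Rightarrow> complex" and \<gamma> kk C \<alpha> d :: real and K q M :: nat
  assumes \<gamma>: "\<gamma> > 0" and KM: "K \<le> M" and \<alpha>: "\<alpha> > 1/2" and d: "0 < d" "d < 1/2"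
    and q: "1 \<le> q" "real q < 1 / (1 - 2*d)"
    and bnd: "\<forall>x. cmod (hh x) \<le> C * \<bar>x\<bar> ^ M * (1 + \<bar>x\<bar>) powr (- \<alpha> - real M)"
    and fh: "fourier_L2 h hh"
  shows "S_class K q d (\<lambda>t. complex_of_real (\<gamma> powr (-1/2)) * h (- t / \<gamma> + kk))"
proof -
  define \<theta> where "\<theta> = (\<lambda>t. complex_of_real (\<gamma> powr (-1/2)) * h (- t / \<gamma> + kk))"
  define g where "g = (\<lambda>\<xi>. complex_of_real (sqrt \<gamma>) * exp (- \<i> * complex_of_real (\<gamma> * kk * \<xi>)) * hh (-\<gamma> * \<xi>))"
  have hL: "L2_fun h" and hhL: "L2_fun hh" using fh unfolding fourier_L2_def by auto
  have [measurable]: "h \<in> borel_measurable borel" "hh \<in> borel_measurable borel" using hL hhL unfolding L2_fun_def by auto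
  have hi: "integrable lborel (\<lambda>t. (cmod (h t))\<^sup>2)" using hL unfolding L2_fun_def by auto
  have hhi: "integrable lborel (\<lambda>t. (cmod (hh t))\<^sup>2)" using hhL unfolding L2_fun_def by auto
  have \<theta>m[measurable]: "\<theta> \<in> borel_measurable borel" unfolding \<theta>_def by measurable
  have gm[measurable]: "g \<in> borel_measurable borel" unfolding g_def by measurable
  have \<theta>L: "L2_fun \<theta>"
  proof -
    have "integrable lborel (\<lambda>t. (cmod (h (kk + (-1/\<gamma>) * t)))\<^sup>2)"
      using lborel_integrable_real_affine[OF hi, of "-1/\<gamma>" kk] \<gamma> by simp
    then have "integrable lborel (\<lambda>t. (\<gamma> powr (-1/2))\<^sup>2 * (cmod (h (kk + (-1/\<gamma>) * t)))\<^sup>2)"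
      by (rule integrable_mult_right)
    also have "(\<lambda>t. (\<gamma> powr (-1/2))\<^sup>2 * (cmod (h (kk + (-1/\<gamma>) * t)))\<^sup>2) = (\<lambda>t. (cmod (\<theta> t))\<^sup>2)"
    proof
      fix t
      have "kk + (-1/\<gamma>) * t = - t / \<gamma> + kk" by simp
      then show "(\<gamma> powr (-1/2))\<^sup>2 * (cmod (h (kk + (-1/\<gamma>) * t)))\<^sup>2 = (cmod (\<theta> t))\<^sup>2"
        unfolding \<theta>_def by (simp add: norm_mult power_mult_distrib)
    qed
    finally show ?thesis unfolding L2_fun_def by simp
  qed
  have gL: "L2_fun g"
  proof -
    have "integrable lborel (\<lambda>t. (cmod (hh (0 + (-\<gamma>) * t)))\<^sup>2)"
      using lborel_integrable_real_affine[OF hhi, of "-\<gamma>" 0] \<gamma> by simp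
    then have "integrable lborel (\<lambda>t. \<gamma> * (cmod (hh (0 + (-\<gamma>) * t)))\<^sup>2)"
      by (rule integrable_mult_right)
    also have "(\<lambda>t. \<gamma> * (cmod (hh (0 + (-\<gamma>) * t)))\<^sup>2) = (\<lambda>t. (cmod (g t))\<^sup>2)"
    proof
      fix t
      show "\<gamma> * (cmod (hh (0 + (-\<gamma>) * t)))\<^sup>2 = (cmod (g t))\<^sup>2"
        unfolding g_def using \<gamma> by (simp add: norm_mult power_mult_distrib)
    qed
    finally show ?thesis unfolding L2_fun_def by simp
  qed
  define Q where "Q = (\<lambda>r. \<integral>\<^sup>+\<eta>. ennreal ((cmod (hh \<eta> - (\<integral>s. indicator {kk - r..kk + r} s *\<^sub>R (h s * exp (- \<i> * complex_of_real (s*\<eta>))) \<partial>lborel)))\<^sup>2) \<partial>lborel)"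
  have Qlim: "(Q \<longlongrightarrow> 0) at_top" unfolding Q_def by (rule window_lim[OF fh])
  have eqQ: "(\<integral>\<^sup>+ \<xi>. ennreal ((cmod (g \<xi> - trunc_fourier \<theta> R \<xi>))\<^sup>2) \<partial>lborel) = Q (R/\<gamma>)" if R: "R \<ge> 0" for R
  proof -
    define D where "D = (\<lambda>\<eta>. (cmod (hh \<eta> - (\<integral>s. indicator {kk - R/\<gamma>..kk + R/\<gamma>} s *\<^sub>R (h s * exp (- \<i> * complex_of_real (s*\<eta>))) \<partial>lborel)))\<^sup>2)"
    have Dm[measurable]: "D \<in> borel_measurable borel" unfolding D_def by measurable
    have pt: "(cmod (g \<xi> - trunc_fourier \<theta> R \<xi>))\<^sup>2 = \<gamma> * D (0 + (-\<gamma>) * \<xi>)" for \<xi>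
    proof -
      have "g \<xi> - trunc_fourier \<theta> R \<xi> = complex_of_real (sqrt \<gamma>) * exp (- \<i> * complex_of_real (\<gamma> * kk * \<xi>)) *
        (hh (-\<gamma> * \<xi>) - (\<integral>s. indicator {kk - R/\<gamma>..kk + R/\<gamma>} s *\<^sub>R (h s * exp (- \<i> * complex_of_real (s * (-\<gamma>*\<xi>)))) \<partial>lborel))"
        unfolding g_def \<theta>_def trunc_scale[OF \<gamma> R] by (simp add: algebra_simps)
      then show ?thesis unfolding D_def using \<gamma> by (simp add: norm_mult power_mult_distrib)
    qed
    have "(\<integral>\<^sup>+ \<xi>. ennreal ((cmod (g \<xi> - trunc_fourier \<theta> R \<xi>))\<^sup>2) \<partial>lborel) = (\<integral>\<^sup>+ \<xi>. ennreal \<gamma> * ennreal (D (0 + (-\<gamma>) * \<xi>)) \<partial>lborel)"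
      unfolding pt using \<gamma> by (intro nn_integral_cong) (simp add: ennreal_mult D_def)
    also have "\<dots> = ennreal \<gamma> * (\<integral>\<^sup>+ \<xi>. ennreal (D (0 + (-\<gamma>) * \<xi>)) \<partial>lborel)"
      by (rule nn_integral_cmult) measurable
    also have "\<dots> = (\<integral>\<^sup>+ \<eta>. ennreal (D \<eta>) \<partial>lborel)"
      using nn_integral_real_affine[where f="\<lambda>\<eta>. ennreal (D \<eta>)" and c="-\<gamma>" and t=0] \<gamma> by simp
    finally show ?thesis unfolding D_def Q_def .
  qed
  have lim: "((\<lambda>R. \<integral>\<^sup>+ \<xi>. ennreal ((cmod (g \<xi> - trunc_fourier \<theta> R \<xi>))\<^sup>2) \<partial>lborel) \<longlongrightarrow> 0) at_top"
  proof -
    have f: "filterlim (\<lambda>R. R / \<gamma>) at_top at_top"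
      using filterlim_tendsto_pos_mult_at_top[OF tendsto_const[of "1/\<gamma>"] _ filterlim_ident] \<gamma>
      by (simp add: divide_inverse mult.commute)
    have "((\<lambda>R. Q (R/\<gamma>)) \<longlongrightarrow> 0) at_top" by (rule filterlim_compose[OF Qlim f])
    moreover have "eventually (\<lambda>R. Q (R/\<gamma>) = (\<integral>\<^sup>+ \<xi>. ennreal ((cmod (g \<xi> - trunc_fourier \<theta> R \<xi>))\<^sup>2) \<partial>lborel)) at_top"
      using eventually_ge_at_top[of 0] by eventually_elim (simp add: eqQ)
    ultimately show ?thesis by (rule Lim_transform_eventually)
  qed
  have fL: "fourier_L2 \<theta> g" unfolding fourier_L2_def using \<theta>L gL lim by simp
  define E where "E = real q - 1 - 2 * d * real q - 2 * real K"
  have q1: "real q * (1 - 2*d) < 1" using q d by (simp add: field_simps)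
  have q0: "real q * (1 - 2*d) > 0" using q d by simp
  have E1: "2 * real M + E > -1" unfolding E_def using KM q0 by (simp add: algebra_simps)
  have E2: "E - 2*\<alpha> < -1" unfolding E_def using q1 \<alpha> by (simp add: algebra_simps)
  define F where "F = (\<lambda>\<eta>. ennreal ((cmod (hh \<eta>))\<^sup>2 * \<bar>\<eta>\<bar> powr E))"
  have Fm[measurable]: "F \<in> borel_measurable borel" unfolding F_def by measurable
  have Ffin: "(\<integral>\<^sup>+\<eta>. F \<eta> \<partial>lborel) < \<infinity>"
    unfolding F_def by (rule hat_fin[OF _ _ E1 E2]) (use bnd \<alpha> in auto)
  have Faff: "(\<integral>\<^sup>+\<eta>. F \<eta> \<partial>lborel) = ennreal \<gamma> * (\<integral>\<^sup>+\<xi>. F (0 + (-\<gamma>) * \<xi>) \<partial>lborel)"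
    using nn_integral_real_affine[where f=F and c="-\<gamma>" and t=0] \<gamma> by simp
  have Ffin2: "(\<integral>\<^sup>+\<xi>. F (0 + (-\<gamma>) * \<xi>) \<partial>lborel) < \<infinity>"
    using Ffin \<gamma> unfolding Faff by (auto simp: ennreal_mult_less_top)
  have "(\<integral>\<^sup>+ \<xi>. ennreal ((cmod (g \<xi>))\<^sup>2 * \<bar>\<xi>\<bar> powr E) \<partial>lborel) = (\<integral>\<^sup>+ \<xi>. ennreal (\<gamma> * \<gamma> powr (-E)) * F (0 + (-\<gamma>) * \<xi>) \<partial>lborel)"
  proof (intro nn_integral_cong)
    fix \<xi>
    have a: "\<bar>0 + (-\<gamma>) * \<xi>\<bar> powr E = \<gamma> powr E * \<bar>\<xi>\<bar> powr E" using \<gamma> by (simp add: abs_mult powr_mult)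
    have b: "\<gamma> powr (-E) * \<gamma> powr E = 1" using \<gamma> by (simp add: powr_add[symmetric])
    have "(cmod (g \<xi>))\<^sup>2 * \<bar>\<xi>\<bar> powr E = (\<gamma> * \<gamma> powr (-E)) * ((cmod (hh (0 + (-\<gamma>) * \<xi>)))\<^sup>2 * \<bar>0 + (-\<gamma>) * \<xi>\<bar> powr E)"
      unfolding a g_def using \<gamma> b by (simp add: norm_mult power_mult_distrib algebra_simps)
    then show "ennreal ((cmod (g \<xi>))\<^sup>2 * \<bar>\<xi>\<bar> powr E) = ennreal (\<gamma> * \<gamma> powr (-E)) * F (0 + (-\<gamma>) * \<xi>)"
      unfolding F_def using \<gamma> by (simp add: ennreal_mult)
  qed
  also have "\<dots> = ennreal (\<gamma> * \<gamma> powr (-E)) * (\<integral>\<^sup>+\<xi>. F (0 + (-\<gamma>) * \<xi>) \<partial>lborel)"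
    by (rule nn_integral_cmult) measurable
  also have "\<dots> < \<infinity>" using Ffin2 by (simp add: ennreal_mult_less_top)
  finally have wfin: "(\<integral>\<^sup>+ \<xi>. ennreal ((cmod (g \<xi>))\<^sup>2 * \<bar>\<xi>\<bar> powr E) \<partial>lborel) < \<infinity>" .
  show ?thesis unfolding \<theta>_def[symmetric] S_class_def using \<theta>L fL wfin unfolding E_def by blast
qed

theorem mainTheorem3:
  fixes d :: real and q K :: nat
  assumes "0 < d" and "d < 1/2" and "1 \<le> q" and "real q < 1 / (1 - 2 * d)"
  shows "(\<forall>\<theta> g. S_class K q d \<theta> \<longrightarrow> fourier_L2 \<theta> g \<longrightarrow> qfold_integral K q d g < \<infinity>) \<and>
    (\<forall>(M::nat) (\<alpha>::real) (C::real) (h_inf::real \<Rightarrow> complex) (h_inf_hat::real \<Rightarrow> complex)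
        (\<gamma>::int \<Rightarrow> real).
      K \<le> M \<longrightarrow> \<alpha> > 1/2 \<longrightarrow> C > 0 \<longrightarrow>
      (\<forall>x. cmod (h_inf_hat x) \<le> C * \<bar>x\<bar> ^ M * (1 + \<bar>x\<bar>) powr (- \<alpha> - real M)) \<longrightarrow>
      fourier_L2 h_inf h_inf_hat \<longrightarrow>
      (\<forall>m. \<gamma> m > 0) \<longrightarrow>
      (\<forall>m k. S_class K q d (h_mk h_inf \<gamma> m k)))"
  proof -
  have A: "\<forall>\<theta> g. S_class K q d \<theta> \<longrightarrow> fourier_L2 \<theta> g \<longrightarrow> qfold_integral K q d g < \<infinity>"
    using part1[OF assms] by blast
  have B: "\<forall>(M::nat) (\<alpha>::real) (C::real) (h_inf::real \<Rightarrow> complex) (h_inf_hat::real \<Rightarrow> complex)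
        (\<gamma>::int \<Rightarrow> real).
      K \<le> M \<longrightarrow> \<alpha> > 1/2 \<longrightarrow> C > 0 \<longrightarrow>
      (\<forall>x. cmod (h_inf_hat x) \<le> C * \<bar>x\<bar> ^ M * (1 + \<bar>x\<bar>) powr (- \<alpha> - real M)) \<longrightarrow>
      fourier_L2 h_inf h_inf_hat \<longrightarrow>
      (\<forall>m. \<gamma> m > 0) \<longrightarrow>
      (\<forall>m k. S_class K q d (h_mk h_inf \<gamma> m k))"
  proof (intro allI impI)
    fix M :: nat and \<alpha> C :: real and h_inf h_inf_hat :: "real \<Rightarrow> complex" and \<gamma> :: "int \<Rightarrow> real" and m k :: int
    assume KM: "K \<le> M" and \<alpha>: "\<alpha> > 1/2" and C: "C > 0"
      and bnd: "\<forall>x. cmod (h_inf_hat x) \<le> C * \<bar>x\<bar> ^ M * (1 + \<bar>x\<bar>) powr (- \<alpha> - real M)"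
      and fh: "fourier_L2 h_inf h_inf_hat" and \<gamma>: "\<forall>m. \<gamma> m > 0"
    have e: "h_mk h_inf \<gamma> m k = (\<lambda>t. complex_of_real (\<gamma> m powr (-1/2)) * h_inf (- t / \<gamma> m + real_of_int k))"
      by (rule ext) (simp add: h_mk_def)
    show "S_class K q d (h_mk h_inf \<gamma> m k)"
      unfolding e by (rule part2_one[OF _ KM \<alpha> assms(1,2,3,4) bnd fh]) (use \<gamma> in simp)
  qed
  show ?thesis using A B by blast
qed

end
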